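(* Let $\mathsf{RCA}_0+B\Sigma^0_2$ be the base theory. Then $B\Sigma^0_3$ is equivalent to the following statement: for every $u\in\mathbb{N}$ and every function $h:u\times\mathbb{N}\to\mathbb{N}$ such that for every $x<u$ there is $m$ with $h(x,z)<m$ for infinitely many $z$, there is $M\in\mathbb{N}$ such that for every $x<u$, $h(x,z)<M$ for infinitely many $z$.
   Context: $\mathbb{N}$ denotes the first-order universe of a model of second-order arithmetic; $h$ ranges over functions (sets) of the model. $B\Sigma^0_n$ is the $\Sigma^0_n$ bounding (collection) scheme. *)

theory Defs
  imports Main
begin

text \<open>Model-theoretic setting: L2-structures (Henkin models of second-order
arithmetic) whose first-order universe is the whole type 'a, together with the
collection of sets of the model. Arithmetical formulas are deeply embedded
(de Bruijn indices for number variables, set variables indexed by nat).\<close>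

record 'a l2model =
  zer :: 'a
  one :: 'a
  add :: "'a \<Rightarrow> 'a \<Rightarrow> 'a"
  mul :: "'a \<Rightarrow> 'a \<Rightarrow> 'a"
  lt  :: "'a \<Rightarrow> 'a \<Rightarrow> bool"
  sets :: "'a set set"

datatype tm = Var nat | Zero | One | Plus tm tm | Times tm tm

datatype fm =
    Eq tm tm | Less tm tm | Mem tm nat
  | Neg fm | Conj fm fm | Disj fm fm
  | Ex fm | All fm
  | BEx tm fm   \<comment> \<open>exists x < t (t evaluated outside the binder)\<close>
  | BAll tm fm

primrec evt :: "'a l2model \<Rightarrow> (nat \<Rightarrow> 'a) \<Rightarrow> tm \<Rightarrow> 'a" where
  "evt M e (Var k) = e k"
| "evt M e Zero = zer M"
| "evt M e One = one M"
| "evt M e (Plus s t) = add M (evt M e s) (evt M e t)"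
| "evt M e (Times s t) = mul M (evt M e s) (evt M e t)"

primrec sat :: "'a l2model \<Rightarrow> (nat \<Rightarrow> 'a) \<Rightarrow> (nat \<Rightarrow> 'a set) \<Rightarrow> fm \<Rightarrow> bool" where
  "sat M e E (Eq s t) = (evt M e s = evt M e t)"
| "sat M e E (Less s t) = lt M (evt M e s) (evt M e t)"
| "sat M e E (Mem t k) = (evt M e t \<in> E k)"
| "sat M e E (Neg p) = (\<not> sat M e E p)"
| "sat M e E (Conj p q) = (sat M e E p \<and> sat M e E q)"
| "sat M e E (Disj p q) = (sat M e E p \<or> sat M e E q)"
| "sat M e E (Ex p) = (\<exists>a. sat M (case_nat a e) E p)"
| "sat M e E (All p) = (\<forall>a. sat M (case_nat a e) E p)"
| "sat M e E (BEx t p) = (\<exists>a. lt M a (evt M e t) \<and> sat M (case_nat a e) E p)"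
| "sat M e E (BAll t p) = (\<forall>a. lt M a (evt M e t) \<longrightarrow> sat M (case_nat a e) E p)"

inductive delta0 :: "fm \<Rightarrow> bool" where
  "delta0 (Eq s t)" | "delta0 (Less s t)" | "delta0 (Mem t k)"
| "delta0 p \<Longrightarrow> delta0 (Neg p)"
| "delta0 p \<Longrightarrow> delta0 q \<Longrightarrow> delta0 (Conj p q)"
| "delta0 p \<Longrightarrow> delta0 q \<Longrightarrow> delta0 (Disj p q)"
| "delta0 p \<Longrightarrow> delta0 (BEx t p)"
| "delta0 p \<Longrightarrow> delta0 (BAll t p)"

inductive sigma_fm :: "nat \<Rightarrow> fm \<Rightarrow> bool" and pi_fm :: "nat \<Rightarrow> fm \<Rightarrow> bool" where
  "delta0 p \<Longrightarrow> sigma_fm 0 p"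
| "delta0 p \<Longrightarrow> pi_fm 0 p"
| "pi_fm n p \<Longrightarrow> sigma_fm (Suc n) p"
| "sigma_fm (Suc n) p \<Longrightarrow> sigma_fm (Suc n) (Ex p)"
| "sigma_fm n p \<Longrightarrow> pi_fm (Suc n) p"
| "pi_fm (Suc n) p \<Longrightarrow> pi_fm (Suc n) (All p)"

definition set_env :: "'a l2model \<Rightarrow> (nat \<Rightarrow> 'a set) \<Rightarrow> bool" where
  "set_env M E \<longleftrightarrow> (\<forall>k. E k \<in> sets M)"

definition basic_axioms :: "'a l2model \<Rightarrow> bool" where
  "basic_axioms M \<longleftrightarrow>
     (\<forall>n. add M n (one M) \<noteq> zer M) \<and>
     (\<forall>m n. add M m (one M) = add M n (one M) \<longrightarrow> m = n) \<and>
     (\<forall>m. \<not> lt M m (zer M)) \<and>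
     (\<forall>m n. lt M m (add M n (one M)) \<longleftrightarrow> (lt M m n \<or> m = n)) \<and>
     (\<forall>m. add M m (zer M) = m) \<and>
     (\<forall>m n. add M m (add M n (one M)) = add M (add M m n) (one M)) \<and>
     (\<forall>m. mul M m (zer M) = zer M) \<and>
     (\<forall>m n. mul M m (add M n (one M)) = add M (mul M m n) m)"

text \<open>Sigma^0_1 induction (with number and set parameters); variable 0 is the induction variable.\<close>
definition sigma1_induction :: "'a l2model \<Rightarrow> bool" where
  "sigma1_induction M \<longleftrightarrow>
     (\<forall>p e E. sigma_fm 1 p \<and> set_env M E \<longrightarrow>
        sat M (case_nat (zer M) e) E p \<and>
        (\<forall>n. sat M (case_nat n e) E p \<longrightarrow> sat M (case_nat (add M n (one M)) e) E p)
        \<longrightarrow> (\<forall>n. sat M (case_nat n e) E p))"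

definition delta1_comprehension :: "'a l2model \<Rightarrow> bool" where
  "delta1_comprehension M \<longleftrightarrow>
     (\<forall>p q e E. sigma_fm 1 p \<and> pi_fm 1 q \<and> set_env M E \<and>
        (\<forall>n. sat M (case_nat n e) E p \<longleftrightarrow> sat M (case_nat n e) E q)
        \<longrightarrow> (\<exists>X\<in>sets M. \<forall>n. n \<in> X \<longleftrightarrow> sat M (case_nat n e) E p))"

definition RCA0 :: "'a l2model \<Rightarrow> bool" where
  "RCA0 M \<longleftrightarrow> basic_axioms M \<and> sigma1_induction M \<and> delta1_comprehension M"

text \<open>Sigma^0_n bounding: for Sigma^0_n p(i,j) (j = var 0, i = var 1, rest parameters),
  forall u. (forall i<u. exists j. p) --> exists v. forall i<u. exists j<v. p.\<close>
definition BSigma :: "nat \<Rightarrow> 'a l2model \<Rightarrow> bool" where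
  "BSigma n M \<longleftrightarrow>
     (\<forall>p e E u. sigma_fm n p \<and> set_env M E \<longrightarrow>
        (\<forall>i. lt M i u \<longrightarrow> (\<exists>j. sat M (case_nat j (case_nat i e)) E p))
        \<longrightarrow> (\<exists>v. \<forall>i. lt M i u \<longrightarrow> (\<exists>j. lt M j v \<and> sat M (case_nat j (case_nat i e)) E p)))"

definition mpair :: "'a l2model \<Rightarrow> 'a \<Rightarrow> 'a \<Rightarrow> 'a" where
  "mpair M a b = add M (mul M (add M a b) (add M a b)) a"

text \<open>H is (the code of) a function h : u \<times> N \<rightarrow> N: a set of pairs ((x,z),y) with x<u,
  total and single-valued on u \<times> N.\<close>
definition is_fun2 :: "'a l2model \<Rightarrow> 'a set \<Rightarrow> 'a \<Rightarrow> bool" where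
  "is_fun2 M H u \<longleftrightarrow>
     (\<forall>w\<in>H. \<exists>x z y. lt M x u \<and> w = mpair M (mpair M x z) y) \<and>
     (\<forall>x z. lt M x u \<longrightarrow> (\<exists>!y. mpair M (mpair M x z) y \<in> H))"

definition val_lt :: "'a l2model \<Rightarrow> 'a set \<Rightarrow> 'a \<Rightarrow> 'a \<Rightarrow> 'a \<Rightarrow> bool" where
  "val_lt M H x z m \<longleftrightarrow> (\<exists>y. mpair M (mpair M x z) y \<in> H \<and> lt M y m)"

text \<open>"for infinitely many z" = unboundedly many z.\<close>
definition inf_many :: "'a l2model \<Rightarrow> ('a \<Rightarrow> bool) \<Rightarrow> bool" where
  "inf_many M P \<longleftrightarrow> (\<forall>k. \<exists>z. lt M k z \<and> P z)"

definition bounded_inf_principle :: "'a l2model \<Rightarrow> bool" where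
  "bounded_inf_principle M \<longleftrightarrow>
     (\<forall>u. \<forall>H\<in>sets M. is_fun2 M H u \<and>
        (\<forall>x. lt M x u \<longrightarrow> (\<exists>m. inf_many M (\<lambda>z. val_lt M H x z m)))
        \<longrightarrow> (\<exists>Mb. \<forall>x. lt M x u \<longrightarrow> inf_many M (\<lambda>z. val_lt M H x z Mb)))"

end

theory Submission
  imports Defs
begin


primrec rent :: "(nat \<Rightarrow> nat) \<Rightarrow> tm \<Rightarrow> tm" where
  "rent f (Var k) = Var (f k)"
| "rent f Zero = Zero"
| "rent f One = One"
| "rent f (Plus s t) = Plus (rent f s) (rent f t)"
| "rent f (Times s t) = Times (rent f s) (rent f t)"

definition liftf :: "(nat \<Rightarrow> nat) \<Rightarrow> nat \<Rightarrow> nat" where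
  "liftf f = case_nat 0 (\<lambda>k. Suc (f k))"

primrec ren :: "(nat \<Rightarrow> nat) \<Rightarrow> fm \<Rightarrow> fm" where
  "ren f (Eq s t) = Eq (rent f s) (rent f t)"
| "ren f (Less s t) = Less (rent f s) (rent f t)"
| "ren f (Mem t k) = Mem (rent f t) k"
| "ren f (Neg p) = Neg (ren f p)"
| "ren f (Conj p q) = Conj (ren f p) (ren f q)"
| "ren f (Disj p q) = Disj (ren f p) (ren f q)"
| "ren f (Ex p) = Ex (ren (liftf f) p)"
| "ren f (All p) = All (ren (liftf f) p)"
| "ren f (BEx t p) = BEx (rent f t) (ren (liftf f) p)"
| "ren f (BAll t p) = BAll (rent f t) (ren (liftf f) p)"

lemma evt_rent: "evt M e (rent f t) = evt M (e \<circ> f) t"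
  by (induction t) auto

lemma case_nat_liftf: "case_nat a e \<circ> liftf f = case_nat a (e \<circ> f)"
  by (rule ext) (simp add: liftf_def split: nat.split)

lemma sat_ren: "sat M e E (ren f p) = sat M (e \<circ> f) E p"
  by (induction p arbitrary: f e) (simp_all add: evt_rent case_nat_liftf)

lemma delta0_ren: "delta0 p \<Longrightarrow> delta0 (ren f p)"
proof (induction p arbitrary: f rule: delta0.induct)
qed (auto intro: delta0.intros)

definition envl :: "'a list \<Rightarrow> (nat \<Rightarrow> 'a) \<Rightarrow> nat \<Rightarrow> 'a" where
  "envl xs e k = (if k < length xs then xs ! k else e (k - length xs))"

lemma envl_Nil[simp]: "envl [] e = e"
  by (rule ext) (simp add: envl_def)

lemma envl_Cons: "envl (x # xs) e = case_nat x (envl xs e)"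
  by (rule ext) (simp add: envl_def split: nat.split)

lemma envl_append: "envl (xs @ ys) e = envl xs (envl ys e)"
  by (rule ext) (auto simp add: envl_def nth_append)

lemma envl_nth[simp]: "k < length xs \<Longrightarrow> envl xs e k = xs ! k"
  by (simp add: envl_def)

lemma envl_ge: "length xs \<le> k \<Longrightarrow> envl xs e k = e (k - length xs)"
  by (simp add: envl_def)

primrec tcl :: "nat \<Rightarrow> tm \<Rightarrow> bool" where
  "tcl n (Var k) = (k < n)"
| "tcl n Zero = True"
| "tcl n One = True"
| "tcl n (Plus s t) = (tcl n s \<and> tcl n t)"
| "tcl n (Times s t) = (tcl n s \<and> tcl n t)"

lemma evt_tcl: "tcl (length xs) t \<Longrightarrow> evt M (envl xs e) t = evt M (envl xs e') t"
  by (induction t) auto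

lemma tcl_rent_Suc: "tcl n t \<Longrightarrow> tcl (Suc n) (rent Suc t)"
  by (induction t) auto

primrec exs :: "nat \<Rightarrow> fm \<Rightarrow> fm" where
  "exs 0 p = p" | "exs (Suc n) p = Ex (exs n p)"
primrec alls :: "nat \<Rightarrow> fm \<Rightarrow> fm" where
  "alls 0 p = p" | "alls (Suc n) p = All (alls n p)"

lemma sat_exs: "sat M e E (exs n p) \<longleftrightarrow> (\<exists>as. length as = n \<and> sat M (envl as e) E p)"
proof (induction n arbitrary: e)
  case 0 then show ?case by simp
next
  case (Suc n)
  show ?case
  proof
    assume "sat M e E (exs (Suc n) p)"
    then obtain a as where "length as = n" "sat M (envl as (case_nat a e)) E p"
      using Suc by auto
    then show "\<exists>as. length as = Suc n \<and> sat M (envl as e) E p"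
      by (intro exI[of _ "as @ [a]"]) (simp add: envl_append envl_Cons)
  next
    assume "\<exists>as. length as = Suc n \<and> sat M (envl as e) E p"
    then obtain as where as: "length as = Suc n" "sat M (envl as e) E p" by blast
    then obtain bs a where "as = bs @ [a]" by (metis length_Suc_conv_rev)
    with as show "sat M e E (exs (Suc n) p)" using Suc
      by (auto simp add: envl_append envl_Cons)
  qed
qed

lemma sat_alls: "sat M e E (alls n p) \<longleftrightarrow> (\<forall>as. length as = n \<longrightarrow> sat M (envl as e) E p)"
proof (induction n arbitrary: e)
  case 0 then show ?case by simp
next
  case (Suc n)
  show ?case
  proof
    assume H: "sat M e E (alls (Suc n) p)"
    show "\<forall>as. length as = Suc n \<longrightarrow> sat M (envl as e) E p"
    proof (intro allI impI)
      fix as :: "'a list" assume "length as = Suc n"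
      then obtain bs a where "as = bs @ [a]" "length bs = n" by (metis length_Suc_conv_rev length_append_singleton nat.inject)
      then show "sat M (envl as e) E p" using H Suc by (auto simp add: envl_append envl_Cons)
    qed
  next
    assume H: "\<forall>as. length as = Suc n \<longrightarrow> sat M (envl as e) E p"
    have "sat M (envl as (case_nat a e)) E p" if "length as = n" for a as
    proof -
      have "sat M (envl (as @ [a]) e) E p" using H that by simp
      then show ?thesis by (simp add: envl_append envl_Cons)
    qed
    then show "sat M e E (alls (Suc n) p)" using Suc by simp
  qed
qed

lemma s1_cases: "sigma_fm (Suc 0) p \<Longrightarrow> delta0 p \<or> (\<exists>q. p = Ex q \<and> sigma_fm (Suc 0) q)"
  by (erule sigma_fm.cases) (auto elim: pi_fm.cases)

lemma p2_cases: "pi_fm (Suc (Suc 0)) p \<Longrightarrow> sigma_fm (Suc 0) p \<or> (\<exists>q. p = All q \<and> pi_fm (Suc (Suc 0)) q)"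
  by (erule pi_fm.cases) auto

lemma s3_cases: "sigma_fm (Suc (Suc (Suc 0))) p \<Longrightarrow> pi_fm (Suc (Suc 0)) p \<or> (\<exists>q. p = Ex q \<and> sigma_fm (Suc (Suc (Suc 0))) q)"
  by (erule sigma_fm.cases) auto

lemma sigma1_form: "sigma_fm (Suc 0) p \<Longrightarrow> \<exists>c d. delta0 d \<and> p = exs c d"
proof (induction p)
  case (Ex p)
  show ?case
  proof (cases "delta0 (Ex p)")
    case True then show ?thesis by (intro exI[of _ 0]) auto
  next
    case False
    then have "sigma_fm (Suc 0) p" using s1_cases[OF Ex.prems] by auto
    then obtain c d where "delta0 d" "p = exs c d" using Ex.IH by blast
    then show ?thesis by (intro exI[of _ "Suc c"] exI[of _ d]) simp
  qed
qed (use s1_cases in \<open>fastforce intro: exI[of _ 0]\<close>)+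

lemma pi2_form: "pi_fm (Suc (Suc 0)) p \<Longrightarrow> \<exists>b q. sigma_fm (Suc 0) q \<and> p = alls b q"
proof (induction p)
  case (All p)
  show ?case
  proof (cases "sigma_fm (Suc 0) (All p)")
    case True then show ?thesis by (intro exI[of _ 0]) auto
  next
    case False
    then have "pi_fm (Suc (Suc 0)) p" using p2_cases[OF All.prems] by auto
    then obtain b q where "sigma_fm (Suc 0) q" "p = alls b q" using All.IH by blast
    then show ?thesis by (intro exI[of _ "Suc b"] exI[of _ q]) simp
  qed
qed (use p2_cases in \<open>fastforce intro: exI[of _ 0]\<close>)+

lemma sigma3_form: "sigma_fm (Suc (Suc (Suc 0))) p \<Longrightarrow> \<exists>k q. pi_fm (Suc (Suc 0)) q \<and> p = exs k q"
proof (induction p)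
  case (Ex p)
  show ?case
  proof (cases "pi_fm (Suc (Suc 0)) (Ex p)")
    case True then show ?thesis by (intro exI[of _ 0]) auto
  next
    case False
    then have "sigma_fm (Suc (Suc (Suc 0))) p" using s3_cases[OF Ex.prems] by auto
    then obtain k q where "pi_fm (Suc (Suc 0)) q" "p = exs k q" using Ex.IH by blast
    then show ?thesis by (intro exI[of _ "Suc k"] exI[of _ q]) simp
  qed
qed (use s3_cases in \<open>fastforce intro: exI[of _ 0]\<close>)+

lemma sigma3_nf: "sigma_fm 3 p \<Longrightarrow> \<exists>k b c d. delta0 d \<and> p = exs k (alls b (exs c d))"
proof -
  assume "sigma_fm 3 p"
  then have "sigma_fm (Suc (Suc (Suc 0))) p" by (simp add: numeral_eq_Suc)
  then obtain k q where q: "pi_fm (Suc (Suc 0)) q" "p = exs k q" using sigma3_form by blast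
  then obtain b r where r: "sigma_fm (Suc 0) r" "q = alls b r" using pi2_form by blast
  then obtain c d where "delta0 d" "r = exs c d" using sigma1_form by blast
  then show ?thesis using q r by blast
qed




definition evl :: "'a l2model \<Rightarrow> 'a list \<Rightarrow> tm \<Rightarrow> 'a" where
  "evl M xs t = evt M (envl xs (\<lambda>_. zer M)) t"

lemma evl_simps[simp]:
  "k < length xs \<Longrightarrow> evl M xs (Var k) = xs ! k"
  "evl M xs Zero = zer M" "evl M xs One = one M"
  "evl M xs (Plus s t) = add M (evl M xs s) (evl M xs t)"
  "evl M xs (Times s t) = mul M (evl M xs s) (evl M xs t)"
  by (simp_all add: evl_def)

lemma evt_evl: "tcl (length xs) t \<Longrightarrow> evt M (envl xs e) t = evl M xs t"
  unfolding evl_def by (rule evt_tcl)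

definition D0 :: "'a l2model \<Rightarrow> (nat \<Rightarrow> 'a set) \<Rightarrow> nat \<Rightarrow> ('a list \<Rightarrow> bool) \<Rightarrow> bool" where
  "D0 M E n P \<longleftrightarrow> (\<exists>\<phi> e. delta0 \<phi> \<and> (\<forall>xs. length xs = n \<longrightarrow> P xs = sat M (envl xs e) E \<phi>))"

lemma D0_atom: "delta0 \<phi> \<Longrightarrow> D0 M E n (\<lambda>xs. sat M (envl xs e) E \<phi>)"
  unfolding D0_def by blast

lemma D0_cong: "D0 M E n P \<Longrightarrow> (\<And>xs. length xs = n \<Longrightarrow> P xs = Q xs) \<Longrightarrow> D0 M E n Q"
  unfolding D0_def by metis

lemma D0_neg: "D0 M E n P \<Longrightarrow> D0 M E n (\<lambda>xs. \<not> P xs)"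
  unfolding D0_def by (metis delta0.intros(4) sat.simps(4))

lemma D0_conj:
  assumes "D0 M E n P" "D0 M E n Q"
  shows "D0 M E n (\<lambda>xs. P xs \<and> Q xs)"
proof -
  obtain \<phi>1 e1 where 1: "delta0 \<phi>1" "\<forall>xs. length xs = n \<longrightarrow> P xs = sat M (envl xs e1) E \<phi>1"
    using assms(1) unfolding D0_def by blast
  obtain \<phi>2 e2 where 2: "delta0 \<phi>2" "\<forall>xs. length xs = n \<longrightarrow> Q xs = sat M (envl xs e2) E \<phi>2"
    using assms(2) unfolding D0_def by blast
  define f1 where "f1 k = (if k < n then k else n + 2 * (k - n))" for k
  define f2 where "f2 k = (if k < n then k else n + 2 * (k - n) + 1)" for k
  define e where "e k = (if even k then e1 (k div 2) else e2 (k div 2))" for k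
  have a: "envl xs e \<circ> f1 = envl xs e1" if "length xs = n" for xs
    by (rule ext) (simp add: f1_def e_def envl_def that)
  have b: "envl xs e \<circ> f2 = envl xs e2" if "length xs = n" for xs
    by (rule ext) (simp add: f2_def e_def envl_def that)
  show ?thesis unfolding D0_def
    apply (rule exI[of _ "Conj (ren f1 \<phi>1) (ren f2 \<phi>2)"], rule exI[of _ e])
    using 1 2 a b by (auto simp: sat_ren intro: delta0.intros delta0_ren)
qed

lemma D0_disj: "D0 M E n P \<Longrightarrow> D0 M E n Q \<Longrightarrow> D0 M E n (\<lambda>xs. P xs \<or> Q xs)"
proof -
  assume "D0 M E n P" "D0 M E n Q"
  then have "D0 M E n (\<lambda>xs. \<not> (\<not> P xs \<and> \<not> Q xs))" by (intro D0_neg D0_conj)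
  then show ?thesis by (rule D0_cong) simp
qed

lemma D0_imp: "D0 M E n P \<Longrightarrow> D0 M E n Q \<Longrightarrow> D0 M E n (\<lambda>xs. P xs \<longrightarrow> Q xs)"
proof -
  assume "D0 M E n P" "D0 M E n Q"
  then have "D0 M E n (\<lambda>xs. \<not> P xs \<or> Q xs)" by (intro D0_neg D0_disj)
  then show ?thesis by (rule D0_cong) simp
qed

lemma D0_iff: "D0 M E n P \<Longrightarrow> D0 M E n Q \<Longrightarrow> D0 M E n (\<lambda>xs. P xs \<longleftrightarrow> Q xs)"
proof -
  assume "D0 M E n P" "D0 M E n Q"
  then have "D0 M E n (\<lambda>xs. (P xs \<longrightarrow> Q xs) \<and> (Q xs \<longrightarrow> P xs))" by (intro D0_imp D0_conj)
  then show ?thesis by (rule D0_cong) blast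
qed

lemma D0_bex:
  assumes "D0 M E (Suc n) Q" "tcl n t"
  shows "D0 M E n (\<lambda>xs. \<exists>a. lt M a (evl M xs t) \<and> Q (a # xs))"
proof -
  obtain \<phi> e where 1: "delta0 \<phi>" "\<forall>xs. length xs = Suc n \<longrightarrow> Q xs = sat M (envl xs e) E \<phi>"
    using assms(1) unfolding D0_def by blast
  show ?thesis unfolding D0_def
    apply (rule exI[of _ "BEx t \<phi>"], rule exI[of _ e])
    using 1 assms(2) by (auto simp: evt_evl envl_Cons intro: delta0.intros)
qed

lemma D0_ball:
  assumes "D0 M E (Suc n) Q" "tcl n t"
  shows "D0 M E n (\<lambda>xs. \<forall>a. lt M a (evl M xs t) \<longrightarrow> Q (a # xs))"
proof -
  have "D0 M E n (\<lambda>xs. \<not> (\<exists>a. lt M a (evl M xs t) \<and> \<not> Q (a # xs)))"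
    using D0_neg[OF D0_bex[OF D0_neg[OF assms(1)] assms(2)]] .
  then show ?thesis by (rule D0_cong) blast
qed

lemma D0_map:
  assumes "D0 M E m Q" "\<forall>i<m. g i < n + length cs"
  shows "D0 M E n (\<lambda>xs. Q (map (\<lambda>i. (xs @ cs) ! g i) [0..<m]))"
proof -
  obtain \<phi> e where 1: "delta0 \<phi>" "\<forall>xs. length xs = m \<longrightarrow> Q xs = sat M (envl xs e) E \<phi>"
    using assms(1) unfolding D0_def by blast
  define f where "f k = (if k < m then g k else n + length cs + (k - m))" for k
  have a: "envl xs (envl cs e) \<circ> f = envl (map (\<lambda>i. (xs @ cs) ! g i) [0..<m]) e" if "length xs = n" for xs
  proof (rule ext)
    fix k
    have L: "envl xs (envl cs e) = envl (xs @ cs) e" by (simp add: envl_append)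
    show "(envl xs (envl cs e) \<circ> f) k = envl (map (\<lambda>i. (xs @ cs) ! g i) [0..<m]) e k"
    proof (cases "k < m")
      case True
      then show ?thesis using assms(2) that unfolding L by (simp add: f_def)
    next
      case False
      then show ?thesis using assms(2) that unfolding L by (simp add: f_def envl_ge)
    qed
  qed
  show ?thesis unfolding D0_def
    apply (rule exI[of _ "ren f \<phi>"], rule exI[of _ "envl cs e"])
    using 1 a by (auto simp: sat_ren intro: delta0_ren)
qed

lemma map_nth_take: "m \<le> length xs \<Longrightarrow> map (\<lambda>i. xs ! i) [0..<m] = take m xs"
  by (rule nth_equalityI) auto

lemma D0_take: "D0 M E m Q \<Longrightarrow> m \<le> n \<Longrightarrow> D0 M E n (\<lambda>xs. Q (take m xs))"
proof -
  assume a: "D0 M E m Q" "m \<le> n"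
  from D0_map[OF a(1), of "\<lambda>i. i" n "[]"] a(2)
  have "D0 M E n (\<lambda>xs. Q (map (\<lambda>i. xs ! i) [0..<m]))" by simp
  then show ?thesis by (rule D0_cong) (simp add: map_nth_take a(2))
qed

lemma D0_inst: "D0 M E (n + length cs) Q \<Longrightarrow> D0 M E n (\<lambda>xs. Q (xs @ cs))"
proof -
  assume "D0 M E (n + length cs) Q"
  from D0_map[OF this, of "\<lambda>i. i" n cs] have "D0 M E n (\<lambda>xs. Q (map (\<lambda>i. (xs @ cs) ! i) [0..<n + length cs]))"
    by simp
  then show ?thesis by (rule D0_cong) (metis length_append map_nth)
qed

lemma D0_lt_tm: "tcl n s \<Longrightarrow> tcl n t \<Longrightarrow> D0 M E n (\<lambda>xs. lt M (evl M xs s) (evl M xs t))"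
  using D0_atom[of "Less s t" M E n "\<lambda>_. zer M"]
  by (rule D0_cong) (auto intro: delta0.intros simp: evl_def)

lemma D0_eq_tm: "tcl n s \<Longrightarrow> tcl n t \<Longrightarrow> D0 M E n (\<lambda>xs. evl M xs s = evl M xs t)"
  using D0_atom[of "Eq s t" M E n "\<lambda>_. zer M"]
  by (rule D0_cong) (auto intro: delta0.intros simp: evl_def)

lemma D0_mem_tm: "tcl n t \<Longrightarrow> D0 M E n (\<lambda>xs. evl M xs t \<in> E k)"
  using D0_atom[of "Mem t k" M E n "\<lambda>_. zer M"]
  by (rule D0_cong) (auto intro: delta0.intros simp: evl_def)

lemma tcl_rent_Suc_evl: "tcl n t \<Longrightarrow> length xs = n \<Longrightarrow> evl M (a # xs) (rent Suc t) = evl M xs t"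
  by (induction t) auto

lemma D0_bexs:
  "D0 M E (m + n) Q \<Longrightarrow> tcl n t \<Longrightarrow>
   D0 M E n (\<lambda>xs. \<exists>zs. length zs = m \<and> (\<forall>z\<in>set zs. lt M z (evl M xs t)) \<and> Q (zs @ xs))"
proof (induction m arbitrary: n Q t)
  case 0
  then have "D0 M E n Q" by simp
  then show ?case by (rule D0_cong) auto
next
  case (Suc m)
  have "D0 M E (m + Suc n) Q" using Suc.prems by simp
  from Suc.IH[OF this tcl_rent_Suc[OF Suc.prems(2)]]
  have "D0 M E (Suc n) (\<lambda>ws. \<exists>zs. length zs = m \<and> (\<forall>z\<in>set zs. lt M z (evl M ws (rent Suc t))) \<and> Q (zs @ ws))" .
  from D0_bex[OF this Suc.prems(2)]
  have "D0 M E n (\<lambda>xs. \<exists>a. lt M a (evl M xs t) \<and>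
          (\<exists>zs. length zs = m \<and> (\<forall>z\<in>set zs. lt M z (evl M (a # xs) (rent Suc t))) \<and> Q (zs @ a # xs)))" .
  then show ?case
  proof (rule D0_cong)
    fix xs :: "'a list" assume len: "length xs = n"
    show "(\<exists>a. lt M a (evl M xs t) \<and>
          (\<exists>zs. length zs = m \<and> (\<forall>z\<in>set zs. lt M z (evl M (a # xs) (rent Suc t))) \<and> Q (zs @ a # xs))) =
          (\<exists>zs. length zs = Suc m \<and> (\<forall>z\<in>set zs. lt M z (evl M xs t)) \<and> Q (zs @ xs))"
    proof
      assume "\<exists>a. lt M a (evl M xs t) \<and>
          (\<exists>zs. length zs = m \<and> (\<forall>z\<in>set zs. lt M z (evl M (a # xs) (rent Suc t))) \<and> Q (zs @ a # xs))"
      then obtain a zs where "lt M a (evl M xs t)" "length zs = m" "\<forall>z\<in>set zs. lt M z (evl M xs t)" "Q (zs @ a # xs)"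
        using tcl_rent_Suc_evl[OF Suc.prems(2) len] by auto
      then show "\<exists>zs. length zs = Suc m \<and> (\<forall>z\<in>set zs. lt M z (evl M xs t)) \<and> Q (zs @ xs)"
        by (intro exI[of _ "zs @ [a]"]) auto
    next
      assume "\<exists>zs. length zs = Suc m \<and> (\<forall>z\<in>set zs. lt M z (evl M xs t)) \<and> Q (zs @ xs)"
      then obtain zs where zs: "length zs = Suc m" "\<forall>z\<in>set zs. lt M z (evl M xs t)" "Q (zs @ xs)" by blast
      then obtain ys a where "zs = ys @ [a]" by (metis length_Suc_conv_rev)
      with zs show "\<exists>a. lt M a (evl M xs t) \<and>
          (\<exists>zs. length zs = m \<and> (\<forall>z\<in>set zs. lt M z (evl M (a # xs) (rent Suc t))) \<and> Q (zs @ a # xs))"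
        using tcl_rent_Suc_evl[OF Suc.prems(2) len] by auto
    qed
  qed
qed

lemma D0_balls:
  assumes "D0 M E (m + n) Q" "tcl n t"
  shows "D0 M E n (\<lambda>xs. \<forall>zs. length zs = m \<and> (\<forall>z\<in>set zs. lt M z (evl M xs t)) \<longrightarrow> Q (zs @ xs))"
proof -
  have "D0 M E n (\<lambda>xs. \<not> (\<exists>zs. length zs = m \<and> (\<forall>z\<in>set zs. lt M z (evl M xs t)) \<and> \<not> Q (zs @ xs)))"
    using D0_neg[OF D0_bexs[OF D0_neg[OF assms(1)] assms(2)]] .
  then show ?thesis by (rule D0_cong) blast
qed




abbreviation Imp :: "fm \<Rightarrow> fm \<Rightarrow> fm" where "Imp p q \<equiv> Disj (Neg p) q"
abbreviation Iff :: "fm \<Rightarrow> fm \<Rightarrow> fm" where "Iff p q \<equiv> Conj (Imp p q) (Imp q p)"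
abbreviation Le :: "tm \<Rightarrow> tm \<Rightarrow> fm" where "Le s t \<equiv> Disj (Less s t) (Eq s t)"

lemma d0_sigma1: "delta0 p \<Longrightarrow> sigma_fm (Suc 0) p"
  by (auto intro: sigma_fm_pi_fm.intros)
lemma d0_pi1: "delta0 p \<Longrightarrow> pi_fm (Suc 0) p"
  by (auto intro: sigma_fm_pi_fm.intros)
lemma d0_Ex_sigma1: "delta0 p \<Longrightarrow> sigma_fm (Suc 0) (Ex p)"
  by (auto intro: sigma_fm_pi_fm.intros)
lemma d0_All_sigma2: "delta0 p \<Longrightarrow> sigma_fm (Suc (Suc 0)) (All p)"
  by (auto intro: sigma_fm_pi_fm.intros)

locale rca =
  fixes M :: "'a l2model"
  assumes RCA: "RCA0 M" and BS2: "BSigma 2 M" and NE: "sets M \<noteq> {}"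
begin

abbreviation Z where "Z \<equiv> zer M"
abbreviation sc where "sc x \<equiv> add M x (one M)"
abbreviation le where "le x y \<equiv> lt M x y \<or> x = y"

lemma BA: "basic_axioms M" using RCA by (simp add: RCA0_def)
lemma ax_S_ne[simp]: "sc n \<noteq> Z" using BA by (simp add: basic_axioms_def)
lemma ax_S_inj[simp]: "sc m = sc n \<longleftrightarrow> m = n" using BA by (auto simp add: basic_axioms_def)
lemma ax_lt0[simp]: "\<not> lt M m Z" using BA by (simp add: basic_axioms_def)
lemma ax_ltS: "lt M m (sc n) \<longleftrightarrow> lt M m n \<or> m = n" using BA by (simp add: basic_axioms_def)
lemma ax_add0[simp]: "add M m Z = m" using BA by (simp add: basic_axioms_def)
lemma ax_addS[simp]: "add M m (sc n) = sc (add M m n)" using BA by (simp add: basic_axioms_def)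
lemma ax_mul0[simp]: "mul M m Z = Z" using BA by (simp add: basic_axioms_def)
lemma ax_mulS[simp]: "mul M m (sc n) = add M (mul M m n) m" using BA by (simp add: basic_axioms_def)

definition E0 :: "nat \<Rightarrow> 'a set" where "E0 = (\<lambda>_. SOME X. X \<in> sets M)"
lemma E0: "set_env M E0" using NE unfolding set_env_def E0_def by (simp add: some_in_eq)

lemma IND:
  assumes D: "D0 M E 2 D" and SE: "set_env M E" and B: "\<exists>w. D [w, Z]"
    and St: "\<And>a. \<exists>w. D [w, a] \<Longrightarrow> \<exists>w. D [w, sc a]"
  shows "\<exists>w. D [w, a]"
proof -
  obtain \<phi> e where \<phi>: "delta0 \<phi>" "\<forall>xs. length xs = 2 \<longrightarrow> D xs = sat M (envl xs e) E \<phi>"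
    using D unfolding D0_def by blast
  have eq: "(\<exists>w. D [w, b]) = sat M (case_nat b e) E (Ex \<phi>)" for b
    using \<phi>(2) by (simp add: envl_Cons)
  have "sigma1_induction M" using RCA by (simp add: RCA0_def)
  then have "\<forall>p e E. sigma_fm 1 p \<and> set_env M E \<longrightarrow>
        sat M (case_nat Z e) E p \<and>
        (\<forall>n. sat M (case_nat n e) E p \<longrightarrow> sat M (case_nat (sc n) e) E p)
        \<longrightarrow> (\<forall>n. sat M (case_nat n e) E p)" unfolding sigma1_induction_def .
  then have imp: "sigma_fm 1 (Ex \<phi>) \<and> set_env M E \<longrightarrow> sat M (case_nat Z e) E (Ex \<phi>) \<and>
        (\<forall>n. sat M (case_nat n e) E (Ex \<phi>) \<longrightarrow> sat M (case_nat (sc n) e) E (Ex \<phi>))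
        \<longrightarrow> (\<forall>n. sat M (case_nat n e) E (Ex \<phi>))" by blast
  have C: "sigma_fm 1 (Ex \<phi>) \<and> set_env M E" using SE d0_Ex_sigma1[OF \<phi>(1)] by (simp only: One_nat_def)
  have I: "sat M (case_nat Z e) E (Ex \<phi>) \<and>
        (\<forall>n. sat M (case_nat n e) E (Ex \<phi>) \<longrightarrow> sat M (case_nat (sc n) e) E (Ex \<phi>))
        \<longrightarrow> (\<forall>n. sat M (case_nat n e) E (Ex \<phi>))" using mp[OF imp C] .
  have "sat M (case_nat Z e) E (Ex \<phi>)" using B unfolding eq .
  moreover have "\<forall>n. sat M (case_nat n e) E (Ex \<phi>) \<longrightarrow> sat M (case_nat (sc n) e) E (Ex \<phi>)"
    using St unfolding eq by blast
  ultimately show ?thesis using I unfolding eq by blast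
qed

lemma IND_fm:
  assumes "delta0 \<phi>" "sat M (case_nat Z e) E0 \<phi>"
    "\<And>a. sat M (case_nat a e) E0 \<phi> \<Longrightarrow> sat M (case_nat (sc a) e) E0 \<phi>"
  shows "sat M (case_nat a e) E0 \<phi>"
proof -
  have "sigma1_induction M" using RCA by (simp add: RCA0_def)
  then have "\<forall>p e E. sigma_fm 1 p \<and> set_env M E \<longrightarrow>
        sat M (case_nat Z e) E p \<and>
        (\<forall>n. sat M (case_nat n e) E p \<longrightarrow> sat M (case_nat (sc n) e) E p)
        \<longrightarrow> (\<forall>n. sat M (case_nat n e) E p)" unfolding sigma1_induction_def .
  then have imp: "sigma_fm 1 \<phi> \<and> set_env M E0 \<longrightarrow>
        sat M (case_nat Z e) E0 \<phi> \<and>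
        (\<forall>n. sat M (case_nat n e) E0 \<phi> \<longrightarrow> sat M (case_nat (sc n) e) E0 \<phi>)
        \<longrightarrow> (\<forall>n. sat M (case_nat n e) E0 \<phi>)" by blast
  have C: "sigma_fm 1 \<phi> \<and> set_env M E0" using E0 d0_sigma1[OF assms(1)] by (simp only: One_nat_def)
  have "\<forall>n. sat M (case_nat n e) E0 \<phi>"
    by (rule mp[OF mp[OF imp C]]) (intro conjI assms(2) allI impI assms(3))
  then show ?thesis by blast
qed

lemma IND0:
  assumes D: "D0 M E 1 P" and SE: "set_env M E" and B: "P [Z]" and St: "\<And>a. P [a] \<Longrightarrow> P [sc a]"
  shows "P [a]"
proof -
  have "D0 M E 2 (\<lambda>xs. P (map (\<lambda>i. (xs @ []) ! ((\<lambda>i. 1) i)) [0..<1]))"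
    by (rule D0_map[OF D]) simp
  then have D2: "D0 M E 2 (\<lambda>xs. P [xs ! 1])" by (rule D0_cong) simp
  have "\<exists>w. P [[w, a] ! 1]"
    by (rule IND[OF D2 SE]) (use B St in auto)
  then show ?thesis by simp
qed

lemma BND:
  assumes D: "D0 M E 3 D" and SE: "set_env M E" and H: "\<And>i. lt M i u \<Longrightarrow> \<exists>j. \<forall>w. D [w, j, i]"
  shows "\<exists>v. \<forall>i. lt M i u \<longrightarrow> (\<exists>j. lt M j v \<and> (\<forall>w. D [w, j, i]))"
proof -
  obtain \<phi> e where \<phi>: "delta0 \<phi>" "\<forall>xs. length xs = 3 \<longrightarrow> D xs = sat M (envl xs e) E \<phi>"
    using D unfolding D0_def by blast
  have eq: "(\<forall>w. D [w, j, i]) = sat M (case_nat j (case_nat i e)) E (All \<phi>)" for i j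
    using \<phi>(2) by (simp add: envl_Cons)
  have s2: "sigma_fm 2 (All \<phi>)" using d0_All_sigma2[OF \<phi>(1)] by (simp add: numeral_2_eq_2)
  from BS2 have "\<forall>p e E u. sigma_fm 2 p \<and> set_env M E \<longrightarrow>
        (\<forall>i. lt M i u \<longrightarrow> (\<exists>j. sat M (case_nat j (case_nat i e)) E p))
        \<longrightarrow> (\<exists>v. \<forall>i. lt M i u \<longrightarrow> (\<exists>j. lt M j v \<and> sat M (case_nat j (case_nat i e)) E p))"
    unfolding BSigma_def .
  from this[THEN spec[of _ "All \<phi>"], THEN spec[of _ e], THEN spec[of _ E], THEN spec[of _ u]] s2 SE H show ?thesis unfolding eq by blast
qed

lemma COMP:
  assumes D: "D0 M E 1 P" and SE: "set_env M E"
  shows "\<exists>X\<in>sets M. \<forall>n. n \<in> X \<longleftrightarrow> P [n]"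
proof -
  obtain \<phi> e where \<phi>: "delta0 \<phi>" "\<forall>xs. length xs = 1 \<longrightarrow> P xs = sat M (envl xs e) E \<phi>"
    using D unfolding D0_def by blast
  have eq: "P [n] = sat M (case_nat n e) E \<phi>" for n
    using \<phi>(2) by (simp add: envl_Cons)
  have "delta1_comprehension M" using RCA by (simp add: RCA0_def)
  then have "\<forall>p q e E. sigma_fm 1 p \<and> pi_fm 1 q \<and> set_env M E \<and>
        (\<forall>n. sat M (case_nat n e) E p \<longleftrightarrow> sat M (case_nat n e) E q)
        \<longrightarrow> (\<exists>X\<in>sets M. \<forall>n. n \<in> X \<longleftrightarrow> sat M (case_nat n e) E p)"
    unfolding delta1_comprehension_def .
  from this[THEN spec[of _ \<phi>], THEN spec[of _ \<phi>], THEN spec[of _ e], THEN spec[of _ E]]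
  have "\<exists>X\<in>sets M. \<forall>n. n \<in> X \<longleftrightarrow> sat M (case_nat n e) E \<phi>"
    using SE d0_sigma1[OF \<phi>(1)] d0_pi1[OF \<phi>(1)] by simp
  then show ?thesis unfolding eq .
qed

end



context rca begin

lemma lt_sc[simp]: "lt M a (sc a)" by (simp add: ax_ltS)

lemma lt_trans: "lt M x y \<Longrightarrow> lt M y c \<Longrightarrow> lt M x c"
proof -
  assume a: "lt M x y" "lt M y c"
  have "sat M (case_nat c (nth [x, y])) E0
     (Imp (Conj (Less (Var 1) (Var 2)) (Less (Var 2) (Var 0))) (Less (Var 1) (Var 0)))"
    by (rule IND_fm) (auto intro!: delta0.intros simp: ax_ltS)
  then show ?thesis using a by simp
qed

lemma lt_irrefl[simp]: "\<not> lt M a a"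
proof -
  have "sat M (case_nat a (nth [])) E0 (Neg (Less (Var 0) (Var 0)))"
  proof (rule IND_fm)
    fix b assume "sat M (case_nat b (nth [])) E0 (Neg (Less (Var 0) (Var 0)))"
    then have "\<not> lt M b b" by simp
    then show "sat M (case_nat (sc b) (nth [])) E0 (Neg (Less (Var 0) (Var 0)))"
      using lt_trans[of b "sc b" b] lt_sc[of b] by (auto simp: ax_ltS) (metis lt_sc)
  qed (auto intro!: delta0.intros)
  then show ?thesis by simp
qed

lemma zero_le: "le Z a"
proof -
  have "sat M (case_nat a (nth [])) E0 (Le Zero (Var 0))"
    by (rule IND_fm) (auto intro!: delta0.intros simp: ax_ltS)
  then show ?thesis by auto
qed

lemma sc_le_of_lt: "lt M b a \<Longrightarrow> le (sc b) a"
proof -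
  assume a: "lt M b a"
  have "sat M (case_nat a (nth [b])) E0 (Imp (Less (Var 1) (Var 0)) (Le (Plus (Var 1) One) (Var 0)))"
    by (rule IND_fm) (auto intro!: delta0.intros simp: ax_ltS)
  then show ?thesis using a by auto
qed

lemma trich: "lt M a b \<or> a = b \<or> lt M b a"
proof -
  have "sat M (case_nat b (nth [a])) E0 (Disj (Less (Var 1) (Var 0)) (Disj (Eq (Var 1) (Var 0)) (Less (Var 0) (Var 1))))"
  proof (rule IND_fm)
    show "sat M (case_nat Z (nth [a])) E0 (Disj (Less (Var 1) (Var 0)) (Disj (Eq (Var 1) (Var 0)) (Less (Var 0) (Var 1))))"
      using zero_le[of a] by auto
  next
    fix c assume "sat M (case_nat c (nth [a])) E0 (Disj (Less (Var 1) (Var 0)) (Disj (Eq (Var 1) (Var 0)) (Less (Var 0) (Var 1))))"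
    then show "sat M (case_nat (sc c) (nth [a])) E0 (Disj (Less (Var 1) (Var 0)) (Disj (Eq (Var 1) (Var 0)) (Less (Var 0) (Var 1))))"
      using sc_le_of_lt[of c a] by (auto simp: ax_ltS)
  qed (auto intro!: delta0.intros)
  then show ?thesis by auto
qed

lemma lt_asym: "lt M a b \<Longrightarrow> \<not> lt M b a"
  using lt_trans lt_irrefl by blast

lemma not_lt: "\<not> lt M a b \<longleftrightarrow> le b a"
  using trich[of a b] lt_asym lt_irrefl by blast

lemma le_trans: "le a b \<Longrightarrow> le b c \<Longrightarrow> le a c"
  using lt_trans by blast

lemma lt_le_trans: "lt M a b \<Longrightarrow> le b c \<Longrightarrow> lt M a c"
  using lt_trans by blast

lemma le_lt_trans: "le a b \<Longrightarrow> lt M b c \<Longrightarrow> lt M a c"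
  using lt_trans by blast

lemma sc_mono[simp]: "lt M (sc a) (sc b) \<longleftrightarrow> lt M a b"
proof
  assume "lt M (sc a) (sc b)"
  then have "lt M (sc a) b \<or> sc a = b" by (simp add: ax_ltS)
  then show "lt M a b" using lt_trans[of a "sc a" b] by auto
next
  assume "lt M a b"
  then show "lt M (sc a) (sc b)" using sc_le_of_lt[of a b] by (auto simp: ax_ltS)
qed

lemma zero_or_sc: "a = Z \<or> (\<exists>b. a = sc b)"
proof -
  have "sat M (case_nat a (nth [])) E0 (Disj (Eq (Var 0) Zero) (BEx (Var 0) (Eq (Var 1) (Plus (Var 0) One))))"
    by (rule IND_fm) (auto intro!: delta0.intros)
  then show ?thesis by auto
qed

lemma le_sc_iff: "lt M a (sc b) \<longleftrightarrow> le a b" by (simp add: ax_ltS)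

lemma add_0_left[simp]: "add M Z a = a"
proof -
  have "sat M (case_nat a (nth [])) E0 (Eq (Plus Zero (Var 0)) (Var 0))"
    by (rule IND_fm) (auto intro!: delta0.intros)
  then show ?thesis by simp
qed

lemma add_sc_left: "add M (sc a) b = sc (add M a b)"
proof -
  have "sat M (case_nat b (nth [a])) E0 (Eq (Plus (Plus (Var 1) One) (Var 0)) (Plus (Plus (Var 1) (Var 0)) One))"
    by (rule IND_fm) (auto intro!: delta0.intros)
  then show ?thesis by simp
qed

lemma add_comm: "add M a b = add M b a"
proof -
  have "sat M (case_nat b (nth [a])) E0 (Eq (Plus (Var 1) (Var 0)) (Plus (Var 0) (Var 1)))"
    by (rule IND_fm) (auto intro!: delta0.intros simp: add_sc_left)
  then show ?thesis by simp
qed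

lemma add_assoc: "add M (add M a b) c = add M a (add M b c)"
proof -
  have "sat M (case_nat c (nth [a, b])) E0 (Eq (Plus (Plus (Var 1) (Var 2)) (Var 0)) (Plus (Var 1) (Plus (Var 2) (Var 0))))"
    by (rule IND_fm) (auto intro!: delta0.intros)
  then show ?thesis by simp
qed

lemma add_cancel: "add M a c = add M b c \<longleftrightarrow> a = b"
proof -
  have "sat M (case_nat c (nth [a, b])) E0 (Imp (Eq (Plus (Var 1) (Var 0)) (Plus (Var 2) (Var 0))) (Eq (Var 1) (Var 2)))"
    by (rule IND_fm) (auto intro!: delta0.intros)
  then show ?thesis by auto
qed

lemma add_cancel_left: "add M c a = add M c b \<longleftrightarrow> a = b"
  using add_cancel[of a c b] by (simp add: add_comm)

lemma add_lt_mono: "lt M (add M a c) (add M b c) \<longleftrightarrow> lt M a b"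
proof -
  have "sat M (case_nat c (nth [a, b])) E0 (Iff (Less (Plus (Var 1) (Var 0)) (Plus (Var 2) (Var 0))) (Less (Var 1) (Var 2)))"
  proof (rule IND_fm)
    fix d assume "sat M (case_nat d (nth [a, b])) E0 (Iff (Less (Plus (Var 1) (Var 0)) (Plus (Var 2) (Var 0))) (Less (Var 1) (Var 2)))"
    then have "lt M (add M a d) (add M b d) \<longleftrightarrow> lt M a b" by auto
    then show "sat M (case_nat (sc d) (nth [a, b])) E0 (Iff (Less (Plus (Var 1) (Var 0)) (Plus (Var 2) (Var 0))) (Less (Var 1) (Var 2)))"
      by (simp del: sc_mono add: sc_mono[of "add M a d" "add M b d"])
  qed (auto intro!: delta0.intros)
  then show ?thesis by auto
qed

lemma add_lt_mono_left: "lt M (add M c a) (add M c b) \<longleftrightarrow> lt M a b"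
  using add_lt_mono[of a c b] by (simp add: add_comm)

lemma le_add: "le a (add M a b)"
proof -
  have "sat M (case_nat b (nth [a])) E0 (Le (Var 1) (Plus (Var 1) (Var 0)))"
    by (rule IND_fm) (auto intro!: delta0.intros simp: ax_ltS)
  then show ?thesis by auto
qed

lemma le_add2: "le b (add M a b)"
  using le_add[of b a] by (simp add: add_comm)

lemma lt_add_sc: "lt M a (add M a (sc b))"
  using le_add[of a b] le_lt_trans[of a "add M a b" "sc (add M a b)"] by auto

lemma le_add_mono: "le a b \<Longrightarrow> le c d \<Longrightarrow> le (add M a c) (add M b d)"
proof -
  assume 1: "le a b" and 2: "le c d"
  have "le (add M a c) (add M b c)" using 1 add_lt_mono[of a c b] by auto
  moreover have "le (add M b c) (add M b d)" using 2 add_lt_mono_left[of b c d] by auto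
  ultimately show ?thesis by (rule le_trans)
qed

lemma mul_0_left[simp]: "mul M Z a = Z"
proof -
  have "sat M (case_nat a (nth [])) E0 (Eq (Times Zero (Var 0)) Zero)"
    by (rule IND_fm) (auto intro!: delta0.intros)
  then show ?thesis by simp
qed

lemma mul_sc_left: "mul M (sc a) b = add M (mul M a b) b"
proof -
  have "sat M (case_nat b (nth [a])) E0 (Eq (Times (Plus (Var 1) One) (Var 0)) (Plus (Times (Var 1) (Var 0)) (Var 0)))"
  proof (rule IND_fm)
    fix c assume "sat M (case_nat c (nth [a])) E0 (Eq (Times (Plus (Var 1) One) (Var 0)) (Plus (Times (Var 1) (Var 0)) (Var 0)))"
    then have IH: "mul M (sc a) c = add M (mul M a c) c" by simp
    have "add M (add M (mul M a c) c) a = add M (mul M a c) (add M c a)" by (simp add: add_assoc)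
    also have "... = add M (add M (mul M a c) a) c" by (metis add_assoc add_comm)
    finally show "sat M (case_nat (sc c) (nth [a])) E0 (Eq (Times (Plus (Var 1) One) (Var 0)) (Plus (Times (Var 1) (Var 0)) (Var 0)))"
      using IH by (simp add: add_sc_left)
  qed (auto intro!: delta0.intros)
  then show ?thesis by simp
qed

lemma mul_comm: "mul M a b = mul M b a"
proof -
  have "sat M (case_nat b (nth [a])) E0 (Eq (Times (Var 1) (Var 0)) (Times (Var 0) (Var 1)))"
    by (rule IND_fm) (auto intro!: delta0.intros simp: mul_sc_left)
  then show ?thesis by simp
qed

lemma distrib: "mul M a (add M b c) = add M (mul M a b) (mul M a c)"
proof -
  have "sat M (case_nat c (nth [a, b])) E0 (Eq (Times (Var 1) (Plus (Var 2) (Var 0))) (Plus (Times (Var 1) (Var 2)) (Times (Var 1) (Var 0))))"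
  proof (rule IND_fm)
    fix d assume "sat M (case_nat d (nth [a, b])) E0 (Eq (Times (Var 1) (Plus (Var 2) (Var 0))) (Plus (Times (Var 1) (Var 2)) (Times (Var 1) (Var 0))))"
    then have IH: "mul M a (add M b d) = add M (mul M a b) (mul M a d)" by simp
    have "add M (add M (mul M a b) (mul M a d)) a = add M (mul M a b) (add M (mul M a d) a)"
      by (rule add_assoc)
    then show "sat M (case_nat (sc d) (nth [a, b])) E0 (Eq (Times (Var 1) (Plus (Var 2) (Var 0))) (Plus (Times (Var 1) (Var 2)) (Times (Var 1) (Var 0))))"
      using IH by simp
  qed (auto intro!: delta0.intros)
  then show ?thesis by simp
qed

lemma mul_le_mono: "le a b \<Longrightarrow> le (mul M a c) (mul M b c)"
proof -
  assume a: "le a b"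
  have "sat M (case_nat c (nth [a, b])) E0 (Imp (Le (Var 1) (Var 2)) (Le (Times (Var 1) (Var 0)) (Times (Var 2) (Var 0))))"
  proof (rule IND_fm)
    fix d assume "sat M (case_nat d (nth [a, b])) E0 (Imp (Le (Var 1) (Var 2)) (Le (Times (Var 1) (Var 0)) (Times (Var 2) (Var 0))))"
    then have "le a b \<Longrightarrow> le (mul M a d) (mul M b d)" by auto
    then have "le a b \<Longrightarrow> le (add M (mul M a d) a) (add M (mul M b d) b)" using le_add_mono by blast
    then show "sat M (case_nat (sc d) (nth [a, b])) E0 (Imp (Le (Var 1) (Var 2)) (Le (Times (Var 1) (Var 0)) (Times (Var 2) (Var 0))))"
      by auto
  qed (auto intro!: delta0.intros)
  then show ?thesis using a by auto
qed

lemma sq_le_mono: "le a b \<Longrightarrow> le (mul M a a) (mul M b b)"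
proof -
  assume a: "le a b"
  have "le (mul M a a) (mul M b a)" using mul_le_mono[OF a] .
  moreover have "le (mul M a b) (mul M b b)" using mul_le_mono[OF a] .
  ultimately show ?thesis using mul_comm[of a b] le_trans by metis
qed

lemma le_sq: "le a (mul M a a)"
proof (cases "a = Z")
  case True then show ?thesis by simp
next
  case False
  then obtain b where b: "a = sc b" using zero_or_sc by blast
  have "mul M a a = add M (mul M a b) a" by (simp add: b)
  then show ?thesis using le_add2[of a "mul M a b"] by simp
qed

lemma pair_key:
  assumes st: "lt M s t" and as: "le a s"
  shows "lt M (add M (mul M s s) a) (mul M t t)"
proof -
  have "le (sc s) t" using sc_le_of_lt[OF st] .
  then have 1: "le (mul M (sc s) (sc s)) (mul M t t)" by (rule sq_le_mono)
  have 2: "mul M (sc s) (sc s) = add M (add M (mul M s s) s) (sc s)"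
    by (simp add: mul_sc_left)
  have 3: "le (add M (mul M s s) a) (add M (mul M s s) s)"
    using as add_lt_mono_left[of "mul M s s" a s] by blast
  have 4: "lt M (add M (mul M s s) s) (add M (add M (mul M s s) s) (sc s))"
    by (rule lt_add_sc)
  have "lt M (add M (mul M s s) a) (mul M (sc s) (sc s))" using le_lt_trans[OF 3 4] unfolding 2 .
  then show ?thesis using lt_le_trans[OF _ 1] by blast
qed

lemma mpair_inj:
  assumes "mpair M a b = mpair M a' b'"
  shows "a = a' \<and> b = b'"
proof -
  define s where "s = add M a b"
  define t where "t = add M a' b'"
  have eq: "add M (mul M s s) a = add M (mul M t t) a'" using assms by (simp add: mpair_def s_def t_def)
  have as: "le a s" and at: "le a' t" using le_add s_def t_def by auto
  have "\<not> lt M s t"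
  proof
    assume "lt M s t"
    from pair_key[OF this as] have "lt M (add M (mul M s s) a) (mul M t t)" .
    moreover have "le (mul M t t) (add M (mul M t t) a')" by (rule le_add)
    ultimately have "lt M (add M (mul M s s) a) (add M (mul M t t) a')" by (rule lt_le_trans)
    then show False using eq by simp
  qed
  moreover have "\<not> lt M t s"
  proof
    assume "lt M t s"
    from pair_key[OF this at] have "lt M (add M (mul M t t) a') (mul M s s)" .
    moreover have "le (mul M s s) (add M (mul M s s) a)" by (rule le_add)
    ultimately have "lt M (add M (mul M t t) a') (add M (mul M s s) a)" by (rule lt_le_trans)
    then show False using eq by simp
  qed
  ultimately have st: "s = t" using trich by blast
  then have "add M (mul M s s) a = add M (mul M s s) a'" using eq by simp
  then have aa: "a = a'" using add_cancel_left by blast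
  have "add M a b = add M a b'" using st aa unfolding s_def t_def by simp
  then have "b = b'" using add_cancel_left by blast
  with aa show ?thesis by simp
qed

lemma mpair_ge1: "le a (mpair M a b)"
  unfolding mpair_def by (rule le_add2)

lemma mpair_ge2: "le b (mpair M a b)"
proof -
  have 1: "le b (add M a b)" by (rule le_add2)
  have 2: "le (add M a b) (mul M (add M a b) (add M a b))" by (rule le_sq)
  have 3: "le (mul M (add M a b) (add M a b)) (mpair M a b)" unfolding mpair_def by (rule le_add)
  show ?thesis using le_trans[OF le_trans[OF 1 2] 3] .
qed

end



lemma map_front: "length xs = n \<Longrightarrow> map (\<lambda>i. (xs @ [t]) ! (case i of 0 \<Rightarrow> n | Suc k \<Rightarrow> k)) [0..<Suc n] = t # xs"
  apply (rule nth_equalityI)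
   apply (auto simp: nth_append nth_Cons split: nat.split)
  using less_antisym by blast

lemma map_rot: "length zs = m \<Longrightarrow>
  map (\<lambda>i. (zs @ [w, N, t, c]) ! (if i = 0 then m + 2 else i - 1)) [0..<m + 3] = t # zs @ [w, N]"
  by (rule nth_equalityI) (auto simp: nth_append nth_Cons split: nat.split)

lemma list2: "length xs = 2 \<Longrightarrow> xs = [xs ! 0, xs ! 1]"
  by (rule nth_equalityI) (auto simp: less_Suc_eq numeral_eq_Suc)
lemma list3: "length xs = 3 \<Longrightarrow> xs = [xs ! 0, xs ! 1, xs ! 2]"
  by (rule nth_equalityI) (auto simp: less_Suc_eq numeral_eq_Suc)
lemma list4: "length xs = 4 \<Longrightarrow> xs = [xs ! 0, xs ! 1, xs ! 2, xs ! 3]"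
  by (rule nth_equalityI) (auto simp: less_Suc_eq numeral_eq_Suc)
lemma list5: "length xs = 5 \<Longrightarrow> xs = [xs ! 0, xs ! 1, xs ! 2, xs ! 3, xs ! 4]"
  by (rule nth_equalityI) (auto simp: less_Suc_eq numeral_eq_Suc)

context rca begin

lemma block_bnd:
  assumes SE: "set_env M E"
  shows "D0 M E (m + 2) D \<Longrightarrow>
    (\<And>ts n n'. length ts = m \<Longrightarrow> le n n' \<Longrightarrow> (\<forall>w. D (ts @ [w, n])) \<Longrightarrow> (\<forall>w. D (ts @ [w, n']))) \<Longrightarrow>
    (\<And>ts. length ts = m \<Longrightarrow> \<forall>x\<in>set ts. lt M x c \<Longrightarrow> \<exists>n. \<forall>w. D (ts @ [w, n])) \<Longrightarrow>
    \<exists>N. \<forall>ts. length ts = m \<and> (\<forall>x\<in>set ts. lt M x c) \<longrightarrow> (\<forall>w. D (ts @ [w, N]))"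
proof (induction m arbitrary: D)
  case 0
  then obtain n where "\<forall>w. D ([] @ [w, n])" by fastforce
  then show ?case by (intro exI[of _ n]) auto
next
  case (Suc m)
  note D = Suc.prems(1) and mono = Suc.prems(2) and H = Suc.prems(3)
  have Nt: "\<exists>N. \<forall>ts. length ts = m \<and> (\<forall>x\<in>set ts. lt M x c) \<longrightarrow> (\<forall>w. D (t # ts @ [w, N]))"
    if tc: "lt M t c" for t
  proof -
    have "D0 M E (m + 2) (\<lambda>xs. D (map (\<lambda>i. (xs @ [t]) ! (case i of 0 \<Rightarrow> m + 2 | Suc k \<Rightarrow> k)) [0..<Suc m + 2]))"
      by (rule D0_map[OF D]) (auto split: nat.split)
    then have Dt: "D0 M E (m + 2) (\<lambda>xs. D (t # xs))"
      by (rule D0_cong) (metis add_Suc map_front)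
    show ?thesis
    proof (rule Suc.IH[of "\<lambda>xs. D (t # xs)", simplified])
      show "D0 M E (Suc (Suc m)) (\<lambda>xs. D (t # xs))" using Dt by simp
    next
      fix ts n n' assume "length ts = m" "le n n'" "\<forall>w. D (t # ts @ [w, n])"
      then show "\<forall>w. D (t # ts @ [w, n'])" using mono[of "t # ts" n n'] by simp
    next
      fix ts assume "length ts = m" "\<forall>x\<in>set ts. lt M x c"
      then show "\<exists>n. \<forall>w. D (t # ts @ [w, n])" using H[of "t # ts"] tc by simp
    qed
  qed
  define gg where "gg i = (if i = 0 then m + 2 else i - 1)" for i
  have "D0 M E (m + 4) (\<lambda>L. D (map (\<lambda>i. (L @ []) ! gg i) [0..<Suc m + 2]))"
    by (rule D0_map[OF D]) (auto simp: gg_def)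
  moreover have "Suc m + 2 = m + 3" by simp
  ultimately have Q: "D0 M E (m + 4) (\<lambda>L. D (map (\<lambda>i. L ! gg i) [0..<m + 3]))"
    by (simp only: append_Nil2)
  have "D0 M E 4 (\<lambda>ys. \<forall>zs. length zs = m \<and> (\<forall>z\<in>set zs. lt M z (evl M ys (Var 3))) \<longrightarrow>
      D (map (\<lambda>i. (zs @ ys) ! gg i) [0..<m + 3]))"
    by (rule D0_balls[OF Q]) simp
  then have X: "D0 M E 4 (\<lambda>ys. \<forall>zs. length zs = m \<and> (\<forall>z\<in>set zs. lt M z (ys ! 3)) \<longrightarrow>
      D (map (\<lambda>i. (zs @ ys) ! gg i) [0..<m + 3]))"
    by (rule D0_cong) simp
  have "D0 M E (3 + length [c]) (\<lambda>ys. \<forall>zs. length zs = m \<and> (\<forall>z\<in>set zs. lt M z (ys ! 3)) \<longrightarrow>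
      D (map (\<lambda>i. (zs @ ys) ! gg i) [0..<m + 3]))"
  proof -
    have "3 + length [c] = (4::nat)" by simp
    then show ?thesis using X by (simp only:)
  qed
  from D0_inst[OF this]
  have "D0 M E 3 (\<lambda>xs. \<forall>zs. length zs = m \<and> (\<forall>z\<in>set zs. lt M z ((xs @ [c]) ! 3)) \<longrightarrow>
      D (map (\<lambda>i. (zs @ xs @ [c]) ! gg i) [0..<m + 3]))" by (simp only: append_assoc)
  then have D3: "D0 M E 3 (\<lambda>xs. \<forall>zs. length zs = m \<and> (\<forall>z\<in>set zs. lt M z c) \<longrightarrow>
      D (xs ! 2 # zs @ [xs ! 0, xs ! 1]))"
  proof (rule D0_cong)
    fix xs :: "'a list" assume "length xs = 3"
    then obtain w N t where xs: "xs = [w, N, t]" using list3 by blast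
    have "map (\<lambda>i. (zs @ xs @ [c]) ! gg i) [0..<m + 3] = t # zs @ [w, N]" if "length zs = m" for zs
      using map_rot[OF that, of w N t c] unfolding xs gg_def by simp
    then show "(\<forall>zs. length zs = m \<and> (\<forall>z\<in>set zs. lt M z ((xs @ [c]) ! 3)) \<longrightarrow>
      D (map (\<lambda>i. (zs @ xs @ [c]) ! gg i) [0..<m + 3])) =
      (\<forall>zs. length zs = m \<and> (\<forall>z\<in>set zs. lt M z c) \<longrightarrow> D (xs ! 2 # zs @ [xs ! 0, xs ! 1]))"
      unfolding xs by auto
  qed
  have "\<exists>V. \<forall>i. lt M i c \<longrightarrow> (\<exists>j. lt M j V \<and> (\<forall>w. (\<lambda>xs. \<forall>zs. length zs = m \<and> (\<forall>z\<in>set zs. lt M z c) \<longrightarrow>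
      D (xs ! 2 # zs @ [xs ! 0, xs ! 1])) [w, j, i]))"
  proof (rule BND[OF D3 SE])
    fix t assume "lt M t c"
    from Nt[OF this] show "\<exists>j. \<forall>w. (\<lambda>xs. \<forall>zs. length zs = m \<and> (\<forall>z\<in>set zs. lt M z c) \<longrightarrow>
      D (xs ! 2 # zs @ [xs ! 0, xs ! 1])) [w, j, t]" by auto
  qed
  then obtain V where V: "\<forall>t. lt M t c \<longrightarrow> (\<exists>j. lt M j V \<and> (\<forall>w zs. length zs = m \<and> (\<forall>z\<in>set zs. lt M z c) \<longrightarrow>
      D (t # zs @ [w, j])))" by auto
  show ?case
  proof (intro exI[of _ V] allI impI)
    fix ts w assume ts: "length ts = Suc m \<and> (\<forall>x\<in>set ts. lt M x c)"
    then obtain t zs where tz: "ts = t # zs" "length zs = m" by (metis length_Suc_conv)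
    with ts have tc: "lt M t c" and zc: "\<forall>z\<in>set zs. lt M z c" by auto
    from V tc obtain j where j: "lt M j V" "\<forall>w. D (t # zs @ [w, j])" using tz zc by blast
    from mono[of ts j V] j ts tz show "D (ts @ [w, V])" by auto
  qed
qed

end



lemma upt_small[simp]: "[0..<1] = [0]" "[0..<2] = [0,1]" "[0..<3] = [0,1,2]" "[0..<4] = [0,1,2,3]"
  "[0..<5] = [0,1,2,3,4]"
  by (simp_all add: upt_rec)

lemma D0_map':
  "D0 M E m Q \<Longrightarrow> (\<forall>i<m. g i < n + length cs) \<Longrightarrow>
   (\<And>xs. length xs = n \<Longrightarrow> Q (map (\<lambda>i. (xs @ cs) ! g i) [0..<m]) = R xs) \<Longrightarrow> D0 M E n R"
  using D0_map D0_cong by blast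

lemma D0_bex2: "D0 M E m Q \<Longrightarrow> m = Suc n \<Longrightarrow> tcl n t \<Longrightarrow> D0 M E n (\<lambda>xs. \<exists>a. lt M a (evl M xs t) \<and> Q (a # xs))"
  using D0_bex by blast
lemma D0_ball2: "D0 M E m Q \<Longrightarrow> m = Suc n \<Longrightarrow> tcl n t \<Longrightarrow> D0 M E n (\<lambda>xs. \<forall>a. lt M a (evl M xs t) \<longrightarrow> Q (a # xs))"
  using D0_ball by blast

context rca begin

lemma LNP:
  assumes D: "D0 M E 1 P" and SE: "set_env M E" and Pa: "P [a]"
  shows "\<exists>b. P [b] \<and> (\<forall>c. lt M c b \<longrightarrow> \<not> P [c])"
proof -
  have P2: "D0 M E 2 (\<lambda>xs. P [xs ! 0])"
    by (rule D0_map'[OF D, of "\<lambda>i. 0" _ "[]"]) auto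
  have P3: "D0 M E 3 (\<lambda>xs. P [xs ! 0])"
    by (rule D0_map'[OF D, of "\<lambda>i. 0" _ "[]"]) auto
  have B0: "D0 M E 2 (\<lambda>xs. \<forall>c. lt M c (evl M xs (Var 0)) \<longrightarrow> \<not> P [(c # xs) ! 0])"
    by (rule D0_ball2[OF D0_neg[OF P3]]) simp_all
  have B: "D0 M E 2 (\<lambda>xs. \<forall>c. lt M c (xs ! 0) \<longrightarrow> \<not> P [c])"
    using B0 by (rule D0_cong) simp
  have "D0 M E 2 (\<lambda>xs. P [xs ! 0] \<and> (\<forall>c. lt M c (xs ! 0) \<longrightarrow> \<not> P [c]))"
    by (rule D0_conj[OF P2 B])
  then have A: "D0 M E 1 (\<lambda>xs. \<exists>b. lt M b (evl M xs (Var 0)) \<and> P [(b # xs) ! 0] \<and> (\<forall>c. lt M c ((b # xs) ! 0) \<longrightarrow> \<not> P [c]))"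
    by (rule D0_bex2) simp_all
  have "D0 M E 1 (\<lambda>xs. \<exists>a. lt M a (evl M xs (Var 0)) \<and> P [(a # xs) ! 0])"
    by (rule D0_bex2[OF P2]) simp_all
  from D0_imp[OF this A]
  have Phi: "D0 M E 1 (\<lambda>xs. (\<exists>a. lt M a (xs ! 0) \<and> P [a]) \<longrightarrow> (\<exists>b. lt M b (xs ! 0) \<and> P [b] \<and> (\<forall>c. lt M c b \<longrightarrow> \<not> P [c])))"
    by (rule D0_cong) auto
  have "(\<lambda>xs. (\<exists>a. lt M a (xs ! 0) \<and> P [a]) \<longrightarrow> (\<exists>b. lt M b (xs ! 0) \<and> P [b] \<and> (\<forall>c. lt M c b \<longrightarrow> \<not> P [c]))) [sc a]"
  proof (rule IND0[OF Phi SE])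
    fix n assume IH: "(\<lambda>xs. (\<exists>a. lt M a (xs ! 0) \<and> P [a]) \<longrightarrow> (\<exists>b. lt M b (xs ! 0) \<and> P [b] \<and> (\<forall>c. lt M c b \<longrightarrow> \<not> P [c]))) [n]"
    show "(\<lambda>xs. (\<exists>a. lt M a (xs ! 0) \<and> P [a]) \<longrightarrow> (\<exists>b. lt M b (xs ! 0) \<and> P [b] \<and> (\<forall>c. lt M c b \<longrightarrow> \<not> P [c]))) [sc n]"
    proof (cases "\<exists>a. lt M a n \<and> P [a]")
      case True
      then show ?thesis using IH by (auto simp: ax_ltS)
    next
      case False
      then show ?thesis by (auto simp: ax_ltS)
    qed
  qed simp
  then show ?thesis using Pa by auto
qed

lemma bound_list: "\<exists>B. \<forall>x\<in>set xs. lt M x B"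
proof (induction xs)
  case Nil then show ?case by simp
next
  case (Cons a xs)
  then obtain B where B: "\<forall>x\<in>set xs. lt M x B" by blast
  show ?case
  proof (cases "lt M a B")
    case True then show ?thesis using B by auto
  next
    case False
    then have "le B a" using not_lt by blast
    then have "lt M B (sc a)" by (simp add: ax_ltS)
    then show ?thesis using B lt_trans by (intro exI[of _ "sc a"]) auto
  qed
qed

lemma bound2: "\<exists>B. lt M x B \<and> lt M y B"
  using bound_list[of "[x, y]"] by auto

end

locale rctx = rca M for M :: "'a l2model" +
  fixes E :: "nat \<Rightarrow> 'a set" and \<delta> :: fm and e :: "nat \<Rightarrow> 'a" and k b c :: nat
  assumes SE: "set_env M E" and dl: "delta0 \<delta>"
begin

definition Th :: "'a list \<Rightarrow> bool" where "Th L = sat M (envl L e) E \<delta>"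
definition bnd :: "'a \<Rightarrow> 'a list \<Rightarrow> bool" where "bnd x ys = (\<forall>y\<in>set ys. lt M y x)"

definition G :: "'a \<Rightarrow> 'a \<Rightarrow> 'a \<Rightarrow> 'a \<Rightarrow> bool" where
  "G i J l s = (lt M l s \<and> (\<exists>t. length t = Suc k \<and> bnd J t \<and>
      (\<forall>ys. length ys = b \<and> bnd l ys \<longrightarrow> (\<exists>zs. length zs = c \<and> bnd s zs \<and> Th (zs @ ys @ t @ [i])))))"

lemma D0_Th: "D0 M E n Th"
  unfolding Th_def by (rule D0_atom[OF dl])

lemma D0_G: "D0 M E 4 (\<lambda>xs. G (xs ! 0) (xs ! 1) (xs ! 2) (xs ! 3))"
proof -
  define N where "N = c + b + Suc k + 1"
  have T0: "D0 M E (c + (b + (Suc k + 4))) (\<lambda>L. Th (take N L))"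
    by (rule D0_take[OF D0_Th]) (simp add: N_def)
  have A1: "D0 M E (b + (Suc k + 4)) (\<lambda>ws. \<exists>zs. length zs = c \<and> (\<forall>z\<in>set zs. lt M z (evl M ws (Var (b + Suc k + 3)))) \<and> Th (take N (zs @ ws)))"
    by (rule D0_bexs[OF T0]) simp
  have A2: "D0 M E (Suc k + 4) (\<lambda>vs. \<forall>ys. length ys = b \<and> (\<forall>y\<in>set ys. lt M y (evl M vs (Var (Suc k + 2)))) \<longrightarrow>
      (\<exists>zs. length zs = c \<and> (\<forall>z\<in>set zs. lt M z (evl M (ys @ vs) (Var (b + Suc k + 3)))) \<and> Th (take N (zs @ ys @ vs))))"
    using D0_balls[OF A1, of "Var (Suc k + 2)"] by simp
  have A3: "D0 M E 4 (\<lambda>xs. \<exists>t. length t = Suc k \<and> (\<forall>x\<in>set t. lt M x (evl M xs (Var 1))) \<and>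
      (\<forall>ys. length ys = b \<and> (\<forall>y\<in>set ys. lt M y (evl M (t @ xs) (Var (Suc k + 2)))) \<longrightarrow>
      (\<exists>zs. length zs = c \<and> (\<forall>z\<in>set zs. lt M z (evl M (ys @ t @ xs) (Var (b + Suc k + 3)))) \<and> Th (take N (zs @ ys @ t @ xs)))))"
    using D0_bexs[OF A2, of "Var 1"] by simp
  have A4: "D0 M E 4 (\<lambda>xs. lt M (evl M xs (Var 2)) (evl M xs (Var 3)))"
    by (rule D0_lt_tm) simp_all
  show ?thesis
    using D0_conj[OF A4 A3]
  proof (rule D0_cong)
    fix xs :: "'a list" assume "length xs = 4"
    then obtain i J l s where xs: "xs = [i, J, l, s]" using list4 by blast
    have e1: "evl M (t @ xs) (Var (Suc k + 2)) = l" if "length t = Suc k" for t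
      using that unfolding xs by (simp add: nth_append)
    have e2: "evl M (ys @ t @ xs) (Var (b + Suc k + 3)) = s" if "length t = Suc k" "length ys = b" for t ys
      using that unfolding xs by (simp add: nth_append)
    have e3: "take N (zs @ ys @ t @ xs) = zs @ ys @ t @ [i]" if "length t = Suc k" "length ys = b" "length zs = c" for t ys zs
      using that unfolding xs N_def by simp
    show "(lt M (evl M xs (Var 2)) (evl M xs (Var 3)) \<and> (\<exists>t. length t = Suc k \<and> (\<forall>x\<in>set t. lt M x (evl M xs (Var 1))) \<and>
      (\<forall>ys. length ys = b \<and> (\<forall>y\<in>set ys. lt M y (evl M (t @ xs) (Var (Suc k + 2)))) \<longrightarrow>
      (\<exists>zs. length zs = c \<and> (\<forall>z\<in>set zs. lt M z (evl M (ys @ t @ xs) (Var (b + Suc k + 3)))) \<and> Th (take N (zs @ ys @ t @ xs)))))) =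
      G (xs ! 0) (xs ! 1) (xs ! 2) (xs ! 3)"
      unfolding G_def bnd_def using e1 e2 e3 by (simp add: xs cong: conj_cong)
  qed
qed

end



definition mpt :: "tm \<Rightarrow> tm \<Rightarrow> tm" where "mpt a b = Plus (Times (Plus a b) (Plus a b)) a"

lemma tcl_mpt[simp]: "tcl n (mpt a b) = (tcl n a \<and> tcl n b)" by (auto simp: mpt_def)
lemma evl_mpt[simp]: "evl M xs (mpt a b) = mpair M (evl M xs a) (evl M xs b)" by (simp add: mpt_def mpair_def)
lemma evt_mpt[simp]: "evt M e (mpt a b) = mpair M (evt M e a) (evt M e b)" by (simp add: mpt_def mpair_def)

context rctx begin

definition PROG :: "'a \<Rightarrow> 'a \<Rightarrow> 'a \<Rightarrow> bool" where
  "PROG i J s = (\<exists>s'. lt M s' s \<and> s = sc s' \<and> (\<exists>l. lt M l s \<and> G i J l s \<and> \<not> G i J l s'))"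
definition HP :: "'a \<Rightarrow> 'a \<Rightarrow> 'a \<Rightarrow> bool" where
  "HP i s y = (PROG i y s \<or> y = s)"
definition HD :: "'a \<Rightarrow> 'a \<Rightarrow> 'a \<Rightarrow> bool" where
  "HD i s y = (HP i s y \<and> (\<forall>y'. lt M y' y \<longrightarrow> \<not> HP i s y'))"
definition W :: "'a \<Rightarrow> 'a \<Rightarrow> bool" where
  "W u w = (\<exists>x. lt M x (sc w) \<and> (\<exists>z. lt M z (sc w) \<and> (\<exists>y. lt M y (sc w) \<and>
      w = mpair M (mpair M x z) y \<and> lt M x u \<and> HD x z y)))"

lemma D0_PROG: "D0 M E 3 (\<lambda>xs. PROG (xs ! 0) (xs ! 1) (xs ! 2))"
proof -
  have G1: "D0 M E 5 (\<lambda>L. G (L ! 2) (L ! 3) (L ! 0) (L ! 4))"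
    by (rule D0_map'[OF D0_G, of "\<lambda>x. [2,3,0,4] ! x" _ "[]"]) (auto simp: less_Suc_eq numeral_eq_Suc)
  have G2: "D0 M E 5 (\<lambda>L. G (L ! 2) (L ! 3) (L ! 0) (L ! 1))"
    by (rule D0_map'[OF D0_G, of "\<lambda>x. [2,3,0,1] ! x" _ "[]"]) (auto simp: less_Suc_eq numeral_eq_Suc)
  have I4: "D0 M E 4 (\<lambda>ys. \<exists>l. lt M l (evl M ys (Var 3)) \<and> (G ((l # ys) ! 2) ((l # ys) ! 3) ((l # ys) ! 0) ((l # ys) ! 4) \<and>
      \<not> G ((l # ys) ! 2) ((l # ys) ! 3) ((l # ys) ! 0) ((l # ys) ! 1)))"
    by (rule D0_bex2[OF D0_conj[OF G1 D0_neg[OF G2]]]) simp_all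
  have Eq4: "D0 M E 4 (\<lambda>ys. evl M ys (Var 3) = evl M ys (Plus (Var 0) One))"
    by (rule D0_eq_tm) simp_all
  have I3: "D0 M E 3 (\<lambda>xs. \<exists>s'. lt M s' (evl M xs (Var 2)) \<and> (evl M (s' # xs) (Var 3) = evl M (s' # xs) (Plus (Var 0) One) \<and>
     (\<exists>l. lt M l (evl M (s' # xs) (Var 3)) \<and> (G ((l # s' # xs) ! 2) ((l # s' # xs) ! 3) ((l # s' # xs) ! 0) ((l # s' # xs) ! 4) \<and>
      \<not> G ((l # s' # xs) ! 2) ((l # s' # xs) ! 3) ((l # s' # xs) ! 0) ((l # s' # xs) ! 1)))))"
    by (rule D0_bex2[OF D0_conj[OF Eq4 I4]]) simp_all
  show ?thesis using I3
  proof (rule D0_cong)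
    fix xs :: "'a list" assume "length xs = 3"
    then obtain i J s where xs: "xs = [i, J, s]" using list3 by blast
    show "(\<exists>s'. lt M s' (evl M xs (Var 2)) \<and> (evl M (s' # xs) (Var 3) = evl M (s' # xs) (Plus (Var 0) One) \<and>
     (\<exists>l. lt M l (evl M (s' # xs) (Var 3)) \<and> (G ((l # s' # xs) ! 2) ((l # s' # xs) ! 3) ((l # s' # xs) ! 0) ((l # s' # xs) ! 4) \<and>
      \<not> G ((l # s' # xs) ! 2) ((l # s' # xs) ! 3) ((l # s' # xs) ! 0) ((l # s' # xs) ! 1))))) =
      PROG (xs ! 0) (xs ! 1) (xs ! 2)"
      unfolding xs PROG_def by (simp add: numeral_eq_Suc)
  qed
qed

lemma D0_HP: "D0 M E 3 (\<lambda>xs. HP (xs ! 0) (xs ! 1) (xs ! 2))"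
proof -
  have P: "D0 M E 3 (\<lambda>L. PROG (L ! 0) (L ! 2) (L ! 1))"
    by (rule D0_map'[OF D0_PROG, of "\<lambda>x. [0,2,1] ! x" _ "[]"]) (auto simp: less_Suc_eq numeral_eq_Suc)
  have Q: "D0 M E 3 (\<lambda>L. evl M L (Var 2) = evl M L (Var 1))"
    by (rule D0_eq_tm) simp_all
  show ?thesis using D0_disj[OF P Q]
    by (rule D0_cong) (auto simp: HP_def numeral_eq_Suc)
qed

lemma D0_HD: "D0 M E 3 (\<lambda>xs. HD (xs ! 0) (xs ! 1) (xs ! 2))"
proof -
  have P: "D0 M E 4 (\<lambda>L. HP (L ! 1) (L ! 2) (L ! 0))"
    by (rule D0_map'[OF D0_HP, of "\<lambda>x. [1,2,0] ! x" _ "[]"]) (auto simp: less_Suc_eq numeral_eq_Suc)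
  have Q: "D0 M E 3 (\<lambda>xs. \<forall>y'. lt M y' (evl M xs (Var 2)) \<longrightarrow> \<not> HP ((y' # xs) ! 1) ((y' # xs) ! 2) ((y' # xs) ! 0))"
    by (rule D0_ball2[OF D0_neg[OF P]]) simp_all
  show ?thesis using D0_conj[OF D0_HP Q]
    by (rule D0_cong) (auto simp: HD_def numeral_eq_Suc)
qed

lemma D0_W: "D0 M E 1 (\<lambda>xs. W u (xs ! 0))"
proof -
  have A: "D0 M E 4 (\<lambda>L. evl M L (Var 3) = evl M L (mpt (mpt (Var 2) (Var 1)) (Var 0)))"
    by (rule D0_eq_tm) simp_all
  have B0: "D0 M E (4 + length [u]) (\<lambda>L. lt M (evl M L (Var 2)) (evl M L (Var 4)))"
    by (rule D0_lt_tm) simp_all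
  have B: "D0 M E 4 (\<lambda>L. lt M (L ! 2) u)"
    using D0_inst[OF B0] by (rule D0_cong) (simp add: nth_append)
  have C: "D0 M E 4 (\<lambda>L. HD (L ! 2) (L ! 1) (L ! 0))"
    by (rule D0_map'[OF D0_HD, of "\<lambda>x. [2,1,0] ! x" _ "[]"]) (auto simp: less_Suc_eq numeral_eq_Suc)
  have I4 : "D0 M E 4 (\<lambda>L. evl M L (Var 3) = evl M L (mpt (mpt (Var 2) (Var 1)) (Var 0)) \<and> lt M (L ! 2) u \<and> HD (L ! 2) (L ! 1) (L ! 0))"
    by (intro D0_conj A B C)
  have I3: "D0 M E 3 (\<lambda>L. \<exists>y. lt M y (evl M L (Plus (Var 2) One)) \<and>
     (evl M (y # L) (Var 3) = evl M (y # L) (mpt (mpt (Var 2) (Var 1)) (Var 0)) \<and> lt M ((y # L) ! 2) u \<and> HD ((y # L) ! 2) ((y # L) ! 1) ((y # L) ! 0)))"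
    by (rule D0_bex2[OF I4]) simp_all
  have I2: "D0 M E 2 (\<lambda>L. \<exists>z. lt M z (evl M L (Plus (Var 1) One)) \<and> (\<exists>y. lt M y (evl M (z # L) (Plus (Var 2) One)) \<and>
     (evl M (y # z # L) (Var 3) = evl M (y # z # L) (mpt (mpt (Var 2) (Var 1)) (Var 0)) \<and> lt M ((y # z # L) ! 2) u \<and> HD ((y # z # L) ! 2) ((y # z # L) ! 1) ((y # z # L) ! 0))))"
    by (rule D0_bex2[OF I3]) simp_all
  have I1: "D0 M E 1 (\<lambda>L. \<exists>x. lt M x (evl M L (Plus (Var 0) One)) \<and> (\<exists>z. lt M z (evl M (x # L) (Plus (Var 1) One)) \<and> (\<exists>y. lt M y (evl M (z # x # L) (Plus (Var 2) One)) \<and>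
     (evl M (y # z # x # L) (Var 3) = evl M (y # z # x # L) (mpt (mpt (Var 2) (Var 1)) (Var 0)) \<and> lt M ((y # z # x # L) ! 2) u \<and> HD ((y # z # x # L) ! 2) ((y # z # x # L) ! 1) ((y # z # x # L) ! 0)))))"
    by (rule D0_bex2[OF I2]) simp_all
  show ?thesis using I1
  proof (rule D0_cong)
    fix xs :: "'a list" assume "length xs = 1"
    then obtain w where xs: "xs = [w]" by (metis One_nat_def length_0_conv length_Suc_conv)
    show "(\<exists>x. lt M x (evl M xs (Plus (Var 0) One)) \<and> (\<exists>z. lt M z (evl M (x # xs) (Plus (Var 1) One)) \<and> (\<exists>y. lt M y (evl M (z # x # xs) (Plus (Var 2) One)) \<and>
     (evl M (y # z # x # xs) (Var 3) = evl M (y # z # x # xs) (mpt (mpt (Var 2) (Var 1)) (Var 0)) \<and> lt M ((y # z # x # xs) ! 2) u \<and> HD ((y # z # x # xs) ! 2) ((y # z # x # xs) ! 1) ((y # z # x # xs) ! 0))))) =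
     W u (xs ! 0)"
      unfolding xs W_def by (simp add: numeral_eq_Suc)
  qed
qed

end



context rctx begin

lemma bnd_mono: "bnd x ys \<Longrightarrow> le x y \<Longrightarrow> bnd y ys"
  unfolding bnd_def using lt_le_trans by blast

lemma bnd_ex: "\<exists>B. bnd B ys"
  unfolding bnd_def using bound_list by blast

lemma G_anti: "G i J l s \<Longrightarrow> le l' l \<Longrightarrow> G i J l' s"
  unfolding G_def using le_lt_trans bnd_mono
  by (smt (verit, best) bnd_def lt_le_trans)

lemma G_mono: "G i J l s \<Longrightarrow> le s s' \<Longrightarrow> G i J l s'"
  unfolding G_def using lt_le_trans bnd_mono by metis

lemma D0_HP1: "D0 M E 1 (\<lambda>xs. HP i s (xs ! 0))"
  by (rule D0_map'[OF D0_HP, of "\<lambda>x. [1,2,0] ! x" _ "[i, s]"]) (auto simp: less_Suc_eq numeral_eq_Suc nth_append)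

lemma HD_ex: "\<exists>y. HD i s y"
proof -
  have "HP i s s" by (simp add: HP_def)
  from LNP[OF D0_HP1[of i s] SE, of s] this show ?thesis unfolding HD_def by auto
qed

lemma HD_uniq: "HD i s y \<Longrightarrow> HD i s y' \<Longrightarrow> y = y'"
  unfolding HD_def using trich by blast

lemma HD_le: "HD i s y \<Longrightarrow> HP i s J \<Longrightarrow> le y J"
  unfolding HD_def using not_lt by blast

lemma H_ex: "\<exists>X\<in>sets M. \<forall>w. w \<in> X \<longleftrightarrow> W u w"
  using COMP[OF D0_W SE] by simp

lemma W_pair: "lt M x u \<Longrightarrow> W u (mpair M (mpair M x z) y) \<longleftrightarrow> HD x z y"
proof
  assume "W u (mpair M (mpair M x z) y)"
  then obtain x' z' y' where "mpair M (mpair M x z) y = mpair M (mpair M x' z') y'" "HD x' z' y'"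
    unfolding W_def by blast
  then show "HD x z y" using mpair_inj by metis
next
  assume xu: "lt M x u" and h: "HD x z y"
  define w where "w = mpair M (mpair M x z) y"
  have 1: "le (mpair M x z) w" "le y w" unfolding w_def using mpair_ge1 mpair_ge2 by auto
  have "le x w" using le_trans[OF mpair_ge1 1(1)] .
  moreover have "le z w" using le_trans[OF mpair_ge2 1(1)] .
  ultimately show "W u w" unfolding W_def using 1 xu h w_def by (auto simp: ax_ltS)
qed

lemma val_lt_iff:
  assumes XW: "\<forall>w. w \<in> X \<longleftrightarrow> W u w" and xu: "lt M x u"
  shows "val_lt M X x z m \<longleftrightarrow> (\<exists>y. HD x z y \<and> lt M y m)"
  using XW W_pair[OF xu] unfolding val_lt_def by simp

lemma X_fun:
  assumes XW: "\<forall>w. w \<in> X \<longleftrightarrow> W u w"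
  shows "is_fun2 M X u"
  unfolding is_fun2_def
proof (intro conjI ballI allI impI)
  fix w assume "w \<in> X"
  then show "\<exists>x z y. lt M x u \<and> w = mpair M (mpair M x z) y" using XW unfolding W_def by blast
next
  fix x z assume xu: "lt M x u"
  obtain y where y: "HD x z y" using HD_ex by blast
  show "\<exists>!y. mpair M (mpair M x z) y \<in> X"
  proof (rule ex1I[of _ y])
    show "mpair M (mpair M x z) y \<in> X" using XW W_pair[OF xu] y by simp
  next
    fix y' assume "mpair M (mpair M x z) y' \<in> X"
    then have "HD x z y'" using XW W_pair[OF xu] by simp
    then show "y' = y" using HD_uniq y by blast
  qed
qed

lemma D0_9a: "D0 M E (b + 2) (\<lambda>L. \<exists>zs. length zs = c \<and> bnd (L ! (b + 1)) zs \<and> Th (zs @ take b L @ t0 @ [i]))"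
proof -
  have T1: "D0 M E (c + b) (\<lambda>L. Th (L @ (t0 @ [i])))" by (rule D0_inst[OF D0_Th])
  have T2: "D0 M E (c + (b + 2)) (\<lambda>L. Th (take (c + b) L @ t0 @ [i]))"
    using D0_take[OF T1, of "c + (b + 2)"] by simp
  have T3: "D0 M E (b + 2) (\<lambda>ws. \<exists>zs. length zs = c \<and> (\<forall>z\<in>set zs. lt M z (evl M ws (Var (b + 1)))) \<and> Th (take (c + b) (zs @ ws) @ t0 @ [i]))"
    by (rule D0_bexs[OF T2]) simp
  show ?thesis using T3
    by (rule D0_cong) (simp add: bnd_def cong: conj_cong)
qed

lemma D0_9b: "D0 M E (Suc k + 2) (\<lambda>L. \<not> (\<forall>ys. length ys = b \<and> bnd (L ! (Suc k + 1)) ys \<longrightarrow>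
   (\<exists>zs. length zs = c \<and> bnd (L ! Suc k) zs \<and> Th (zs @ ys @ take (Suc k) L @ [i]))))"
proof -
  have T1: "D0 M E (c + b + Suc k) (\<lambda>L. Th (L @ [i]))" by (rule D0_inst[OF D0_Th])
  have T2: "D0 M E (c + (b + (Suc k + 2))) (\<lambda>L. Th (take (c + b + Suc k) L @ [i]))"
    using D0_take[OF T1, of "c + (b + (Suc k + 2))"] by simp
  have T3: "D0 M E (b + (Suc k + 2)) (\<lambda>ws. \<exists>zs. length zs = c \<and> (\<forall>z\<in>set zs. lt M z (evl M ws (Var (b + Suc k)))) \<and>
      Th (take (c + b + Suc k) (zs @ ws) @ [i]))"
    by (rule D0_bexs[OF T2]) simp
  have T4: "D0 M E (Suc k + 2) (\<lambda>vs. \<forall>ys. length ys = b \<and> (\<forall>y\<in>set ys. lt M y (evl M vs (Var (Suc k + 1)))) \<longrightarrow>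
      (\<exists>zs. length zs = c \<and> (\<forall>z\<in>set zs. lt M z (evl M (ys @ vs) (Var (b + Suc k)))) \<and>
      Th (take (c + b + Suc k) (zs @ ys @ vs) @ [i])))"
    by (rule D0_balls[OF T3]) simp
  show ?thesis using D0_neg[OF T4]
    by (rule D0_cong) (simp add: bnd_def nth_append cong: conj_cong)
qed

end



context rctx begin

lemma D0_G1: "D0 M E 1 (\<lambda>xs. G i J l (xs ! 0))"
  by (rule D0_map'[OF D0_G, of "\<lambda>x. [1,2,3,0] ! x" _ "[i, J, l]"]) (auto simp: less_Suc_eq numeral_eq_Suc nth_append)

lemma D0_Gind: "D0 M E 2 (\<lambda>xs. G i J (xs ! 1) (xs ! 0))"
  by (rule D0_map'[OF D0_G, of "\<lambda>x. [2,3,1,0] ! x" _ "[i, J]"]) (auto simp: less_Suc_eq numeral_eq_Suc nth_append)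

lemma D0_pig: "D0 M E 3 (\<lambda>xs. lt M (xs ! 1) (xs ! 0) \<longrightarrow> \<not> PROG i (xs ! 2) (xs ! 0))"
proof -
  have P: "D0 M E 3 (\<lambda>xs. PROG i (xs ! 2) (xs ! 0))"
    by (rule D0_map'[OF D0_PROG, of "\<lambda>x. [3,2,0] ! x" _ "[i]"]) (auto simp: less_Suc_eq numeral_eq_Suc nth_append)
  have L: "D0 M E 3 (\<lambda>xs. lt M (evl M xs (Var 1)) (evl M xs (Var 0)))"
    by (rule D0_lt_tm) simp_all
  show ?thesis using D0_imp[OF L D0_neg[OF P]] by (rule D0_cong) simp
qed

lemma step2:
  assumes XW: "\<forall>w. w \<in> X \<longleftrightarrow> W u w" and iu: "lt M i u" and xs: "length xs = k"
    and H: "\<forall>ys. length ys = b \<longrightarrow> (\<exists>zs. length zs = c \<and> Th (zs @ ys @ xs @ [j, i]))"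
  shows "\<exists>m. inf_many M (\<lambda>z. val_lt M X i z m)"
proof -
  define t0 where "t0 = xs @ [j]"
  have t0len: "length t0 = Suc k" using xs t0_def by simp
  obtain J where J: "bnd J t0" using bnd_ex by blast
  have "inf_many M (\<lambda>z. val_lt M X i z (sc J))" unfolding inf_many_def
  proof
    fix K0
    obtain l where l: "lt M K0 l" "lt M J l" using bound2 by blast
    have "\<exists>N. \<forall>ts. length ts = b \<and> (\<forall>x\<in>set ts. lt M x l) \<longrightarrow>
        (\<forall>w. (\<lambda>L. \<exists>zs. length zs = c \<and> bnd (L ! (b + 1)) zs \<and> Th (zs @ take b L @ t0 @ [i])) (ts @ [w, N]))"
    proof (rule block_bnd[OF SE D0_9a])
      fix ts n n' assume "length ts = b" "le n n'"
        "\<forall>w. (\<lambda>L. \<exists>zs. length zs = c \<and> bnd (L ! (b + 1)) zs \<and> Th (zs @ take b L @ t0 @ [i])) (ts @ [w, n])"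
      then show "\<forall>w. (\<lambda>L. \<exists>zs. length zs = c \<and> bnd (L ! (b + 1)) zs \<and> Th (zs @ take b L @ t0 @ [i])) (ts @ [w, n'])"
        using bnd_mono by (simp add: nth_append) blast
    next
      fix ts assume "length ts = b" "\<forall>x\<in>set ts. lt M x l"
      then obtain zs where zs: "length zs = c" "Th (zs @ ts @ xs @ [j, i])" using H by blast
      obtain B where "bnd B zs" using bnd_ex by blast
      then show "\<exists>n. \<forall>w. (\<lambda>L. \<exists>zs. length zs = c \<and> bnd (L ! (b + 1)) zs \<and> Th (zs @ take b L @ t0 @ [i])) (ts @ [w, n])"
        using zs \<open>length ts = b\<close> by (intro exI[of _ B]) (auto simp: nth_append t0_def)
    qed
    then obtain S0 where S0: "\<And>ys. length ys = b \<Longrightarrow> bnd l ys \<Longrightarrow> \<exists>zs. length zs = c \<and> bnd S0 zs \<and> Th (zs @ ys @ t0 @ [i])"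
      by (auto simp: nth_append bnd_def)
    obtain s1 where s1: "lt M l s1" "lt M S0 s1" using bound2 by blast
    have "\<forall>ys. length ys = b \<and> bnd l ys \<longrightarrow> (\<exists>zs. length zs = c \<and> bnd s1 zs \<and> Th (zs @ ys @ t0 @ [i]))"
    proof (intro allI impI)
      fix ys assume "length ys = b \<and> bnd l ys"
      then obtain zs where "length zs = c" "bnd S0 zs" "Th (zs @ ys @ t0 @ [i])" using S0 by blast
      then show "\<exists>zs. length zs = c \<and> bnd s1 zs \<and> Th (zs @ ys @ t0 @ [i])"
        using bnd_mono s1 by blast
    qed
    then have "G i J l s1" unfolding G_def using s1 t0len J by blast
    from LNP[OF D0_G1[of i J l] SE, of s1] this
    obtain s0 where s0: "G i J l s0" "\<And>s'. lt M s' s0 \<Longrightarrow> \<not> G i J l s'" by auto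
    have ls0: "lt M l s0" using s0(1) unfolding G_def by blast
    then have "s0 \<noteq> Z" by auto
    then obtain s' where s': "s0 = sc s'" using zero_or_sc by blast
    have "lt M s' s0" using s' by simp
    then have "\<not> G i J l s'" using s0(2) by blast
    then have "PROG i J s0" unfolding PROG_def using s' ls0 s0(1) \<open>lt M s' s0\<close> by blast
    then have hp: "HP i s0 J" by (simp add: HP_def)
    obtain y where y: "HD i s0 y" using HD_ex by blast
    have "lt M y (sc J)" using HD_le[OF y hp] by (simp add: ax_ltS)
    then have "val_lt M X i s0 (sc J)" using val_lt_iff[OF XW iu] y by blast
    moreover have "lt M K0 s0" using lt_trans[OF l(1) ls0] .
    ultimately show "\<exists>z. lt M K0 z \<and> val_lt M X i z (sc J)" by blast
  qed
  then show ?thesis by blast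
qed

lemma step3:
  assumes XW: "\<forall>w. w \<in> X \<longleftrightarrow> W u w" and iu: "lt M i u" and inf: "inf_many M (\<lambda>z. val_lt M X i z Mb)"
  shows "\<exists>j. lt M j Mb \<and> (\<exists>xs. length xs = k \<and> (\<forall>ys. length ys = b \<longrightarrow> (\<exists>zs. length zs = c \<and> Th (zs @ ys @ xs @ [j, i]))))"
proof -
  have a: "\<exists>s. lt M K0 s \<and> (\<exists>c'. lt M c' Mb \<and> PROG i c' s)" for K0
  proof -
    obtain K1 where K1: "lt M K0 K1" "lt M Mb K1" using bound2 by blast
    obtain z where z: "lt M K1 z" "val_lt M X i z Mb" using inf unfolding inf_many_def by blast
    then obtain y where y: "HD i z y" "lt M y Mb" using val_lt_iff[OF XW iu] by blast
    have "lt M y z" using lt_trans[OF y(2) lt_trans[OF K1(2) z(1)]] .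
    then have "y \<noteq> z" by auto
    then have "PROG i y z" using y(1) unfolding HD_def HP_def by blast
    then show ?thesis using y(2) lt_trans[OF K1(1) z(1)] by blast
  qed
  obtain c' where c': "lt M c' Mb" "\<And>K0. \<exists>s. lt M K0 s \<and> PROG i c' s"
  proof -
    have "\<exists>c'. lt M c' Mb \<and> (\<forall>K0. \<exists>s. lt M K0 s \<and> PROG i c' s)"
    proof (rule ccontr)
      assume na: "\<not> (\<exists>c'. lt M c' Mb \<and> (\<forall>K0. \<exists>s. lt M K0 s \<and> PROG i c' s))"
      have "\<exists>v. \<forall>c''. lt M c'' Mb \<longrightarrow> (\<exists>j. lt M j v \<and> (\<forall>w. (\<lambda>xs. lt M (xs ! 1) (xs ! 0) \<longrightarrow> \<not> PROG i (xs ! 2) (xs ! 0)) [w, j, c'']))"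
      proof (rule BND[OF D0_pig SE])
        fix c'' assume "lt M c'' Mb"
        then show "\<exists>j. \<forall>w. (\<lambda>xs. lt M (xs ! 1) (xs ! 0) \<longrightarrow> \<not> PROG i (xs ! 2) (xs ! 0)) [w, j, c'']"
          using na by auto
      qed
      then obtain V where V: "\<And>c''. lt M c'' Mb \<Longrightarrow> \<exists>j. lt M j V \<and> (\<forall>w. lt M j w \<longrightarrow> \<not> PROG i c'' w)"
        by auto
      obtain s c'' where s: "lt M V s" "lt M c'' Mb" "PROG i c'' s" using a by blast
      from V[OF s(2)] obtain j where "lt M j V" "\<forall>w. lt M j w \<longrightarrow> \<not> PROG i c'' w" by blast
      then show False using s lt_trans by blast
    qed
    then show ?thesis using that by blast
  qed
  have c: "\<exists>s. G i c' n s" for n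
  proof -
    have "\<exists>w. (\<lambda>xs. G i c' (xs ! 1) (xs ! 0)) [w, n]"
    proof (rule IND[OF D0_Gind SE])
      obtain s where "PROG i c' s" using c'(2) by blast
      then obtain l where "G i c' l s" unfolding PROG_def by blast
      then have "G i c' Z s" using G_anti zero_le by blast
      then show "\<exists>w. (\<lambda>xs. G i c' (xs ! 1) (xs ! 0)) [w, Z]" by auto
    next
      fix n assume "\<exists>w. (\<lambda>xs. G i c' (xs ! 1) (xs ! 0)) [w, n]"
      then obtain w where w: "G i c' n w" by auto
      obtain r where r: "lt M w r" "PROG i c' r" using c'(2) by blast
      then obtain r' l where rl: "r = sc r'" "lt M l r" "G i c' l r" "\<not> G i c' l r'"
        unfolding PROG_def by blast
      have "le w r'" using r(1) rl(1) by (simp add: ax_ltS)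
      then have "G i c' n r'" using G_mono w by blast
      have "lt M n l"
      proof (rule ccontr)
        assume "\<not> lt M n l"
        then have "le l n" using not_lt by blast
        then have "G i c' l r'" using G_anti \<open>G i c' n r'\<close> by blast
        then show False using rl(4) by blast
      qed
      then have "le (sc n) l" by (rule sc_le_of_lt)
      then have "G i c' (sc n) r" using G_anti rl(3) by blast
      then show "\<exists>w. (\<lambda>xs. G i c' (xs ! 1) (xs ! 0)) [w, sc n]" by auto
    qed
    then show ?thesis by auto
  qed
  have "\<exists>t. length t = Suc k \<and> bnd c' t \<and> (\<forall>ys. length ys = b \<longrightarrow> (\<exists>zs. length zs = c \<and> Th (zs @ ys @ t @ [i])))"
  proof (rule ccontr)
    assume nt: "\<not> (\<exists>t. length t = Suc k \<and> bnd c' t \<and> (\<forall>ys. length ys = b \<longrightarrow> (\<exists>zs. length zs = c \<and> Th (zs @ ys @ t @ [i]))))"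
    have "\<exists>N. \<forall>ts. length ts = Suc k \<and> (\<forall>x\<in>set ts. lt M x c') \<longrightarrow>
       (\<forall>w. (\<lambda>L. \<not> (\<forall>ys. length ys = b \<and> bnd (L ! (Suc k + 1)) ys \<longrightarrow>
         (\<exists>zs. length zs = c \<and> bnd (L ! Suc k) zs \<and> Th (zs @ ys @ take (Suc k) L @ [i])))) (ts @ [w, N]))"
    proof (rule block_bnd[OF SE D0_9b])
      fix ts n n' assume A: "length ts = Suc k" "le n n'"
        "\<forall>w. (\<lambda>L. \<not> (\<forall>ys. length ys = b \<and> bnd (L ! (Suc k + 1)) ys \<longrightarrow>
         (\<exists>zs. length zs = c \<and> bnd (L ! Suc k) zs \<and> Th (zs @ ys @ take (Suc k) L @ [i])))) (ts @ [w, n])"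
      show "\<forall>w. (\<lambda>L. \<not> (\<forall>ys. length ys = b \<and> bnd (L ! (Suc k + 1)) ys \<longrightarrow>
         (\<exists>zs. length zs = c \<and> bnd (L ! Suc k) zs \<and> Th (zs @ ys @ take (Suc k) L @ [i])))) (ts @ [w, n'])"
      proof
        fix w
        from A(3)[rule_format, of w] A(1) obtain ys where ys: "length ys = b" "bnd n ys"
          "\<not> (\<exists>zs. length zs = c \<and> bnd w zs \<and> Th (zs @ ys @ ts @ [i]))"
          by (auto simp: nth_append)
        have "bnd n' ys" using bnd_mono[OF ys(2) A(2)] .
        then show "(\<lambda>L. \<not> (\<forall>ys. length ys = b \<and> bnd (L ! (Suc k + 1)) ys \<longrightarrow>
         (\<exists>zs. length zs = c \<and> bnd (L ! Suc k) zs \<and> Th (zs @ ys @ take (Suc k) L @ [i])))) (ts @ [w, n'])"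
          using ys A(1) by (auto simp: nth_append)
      qed
    next
      fix ts assume A: "length ts = Suc k" "\<forall>x\<in>set ts. lt M x c'"
      then have "\<not> (\<forall>ys. length ys = b \<longrightarrow> (\<exists>zs. length zs = c \<and> Th (zs @ ys @ ts @ [i])))"
        using nt unfolding bnd_def by blast
      then obtain ys where ys: "length ys = b" "\<forall>zs. length zs = c \<longrightarrow> \<not> Th (zs @ ys @ ts @ [i])" by blast
      obtain B where B: "bnd B ys" using bnd_ex by blast
      show "\<exists>n. \<forall>w. (\<lambda>L. \<not> (\<forall>ys. length ys = b \<and> bnd (L ! (Suc k + 1)) ys \<longrightarrow>
         (\<exists>zs. length zs = c \<and> bnd (L ! Suc k) zs \<and> Th (zs @ ys @ take (Suc k) L @ [i])))) (ts @ [w, n])"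
        using ys B A(1) by (intro exI[of _ B]) (auto simp: nth_append)
    qed
    then obtain N where N: "\<forall>ts. length ts = Suc k \<and> (\<forall>x\<in>set ts. lt M x c') \<longrightarrow>
       (\<forall>w. (\<lambda>L. \<not> (\<forall>ys. length ys = b \<and> bnd (L ! (Suc k + 1)) ys \<longrightarrow>
         (\<exists>zs. length zs = c \<and> bnd (L ! Suc k) zs \<and> Th (zs @ ys @ take (Suc k) L @ [i])))) (ts @ [w, N]))"
      by blast
    obtain s where "G i c' N s" using c by blast
    then obtain t where t: "length t = Suc k" "bnd c' t"
      "\<forall>ys. length ys = b \<and> bnd N ys \<longrightarrow> (\<exists>zs. length zs = c \<and> bnd s zs \<and> Th (zs @ ys @ t @ [i]))"
      unfolding G_def by blast
    have "\<not> (\<forall>ys. length ys = b \<and> bnd N ys \<longrightarrow> (\<exists>zs. length zs = c \<and> bnd s zs \<and> Th (zs @ ys @ t @ [i])))"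
      using N[rule_format, of t s] t(1) t(2)[unfolded bnd_def] by (simp add: nth_append)
    then show False using t(3) by blast
  qed
  then obtain t where t: "length t = Suc k" "bnd c' t" "\<forall>ys. length ys = b \<longrightarrow> (\<exists>zs. length zs = c \<and> Th (zs @ ys @ t @ [i]))"
    by blast
  then obtain xs j where xj: "t = xs @ [j]" "length xs = k"
    by (metis length_Suc_conv_rev length_append_singleton nat.inject)
  have "lt M j c'" using t(2) xj(1) unfolding bnd_def by simp
  then have "lt M j Mb" using lt_trans c'(1) by blast
  then show ?thesis using t(3) xj by (intro exI[of _ j]) auto
qed

end



context rctx begin

lemma sat_p: "sat M (case_nat j (case_nat i e)) E (exs k (alls b (exs c \<delta>))) \<longleftrightarrow>
  (\<exists>xs. length xs = k \<and> (\<forall>ys. length ys = b \<longrightarrow> (\<exists>zs. length zs = c \<and> Th (zs @ ys @ xs @ [j, i]))))"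
proof -
  have "case_nat j (case_nat i e) = envl [j, i] e" by (simp add: envl_Cons)
  then show ?thesis by (simp add: sat_exs sat_alls Th_def envl_append)
qed

lemma reverse:
  assumes PR: "bounded_inf_principle M"
    and hyp: "\<forall>i. lt M i u \<longrightarrow> (\<exists>j. sat M (case_nat j (case_nat i e)) E (exs k (alls b (exs c \<delta>))))"
  shows "\<exists>v. \<forall>i. lt M i u \<longrightarrow> (\<exists>j. lt M j v \<and> sat M (case_nat j (case_nat i e)) E (exs k (alls b (exs c \<delta>))))"
proof -
  obtain X where X: "X \<in> sets M" "\<forall>w. w \<in> X \<longleftrightarrow> W u w" using H_ex by blast
  have F: "is_fun2 M X u" by (rule X_fun[OF X(2)])
  have I: "\<forall>x. lt M x u \<longrightarrow> (\<exists>m. inf_many M (\<lambda>z. val_lt M X x z m))"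
  proof (intro allI impI)
    fix x assume xu: "lt M x u"
    then obtain j xs where "length xs = k" "\<forall>ys. length ys = b \<longrightarrow> (\<exists>zs. length zs = c \<and> Th (zs @ ys @ xs @ [j, x]))"
      using hyp sat_p by blast
    then show "\<exists>m. inf_many M (\<lambda>z. val_lt M X x z m)" using step2[OF X(2) xu] by blast
  qed
  from PR have "\<forall>u. \<forall>H\<in>sets M. is_fun2 M H u \<and>
        (\<forall>x. lt M x u \<longrightarrow> (\<exists>m. inf_many M (\<lambda>z. val_lt M H x z m)))
        \<longrightarrow> (\<exists>Mb. \<forall>x. lt M x u \<longrightarrow> inf_many M (\<lambda>z. val_lt M H x z Mb))"
    unfolding bounded_inf_principle_def .
  then obtain Mb where Mb: "\<forall>x. lt M x u \<longrightarrow> inf_many M (\<lambda>z. val_lt M X x z Mb)"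
    using X(1) F I by blast
  show ?thesis
  proof (rule exI[of _ Mb], intro allI impI)
    fix i assume iu: "lt M i u"
    from step3[OF X(2) iu] Mb iu
    show "\<exists>j. lt M j Mb \<and> sat M (case_nat j (case_nat i e)) E (exs k (alls b (exs c \<delta>)))"
      using sat_p by blast
  qed
qed

end

context rca begin

lemma forward:
  assumes B3: "BSigma 3 M"
  shows "bounded_inf_principle M"
  unfolding bounded_inf_principle_def
proof (intro allI ballI impI)
  fix u H assume HS: "H \<in> sets M" and A: "is_fun2 M H u \<and> (\<forall>x. lt M x u \<longrightarrow> (\<exists>m. inf_many M (\<lambda>z. val_lt M H x z m)))"
  define p where "p = All (Ex (Ex (Conj (Less (Var 2) (Var 1)) (Conj (Mem (mpt (mpt (Var 4) (Var 1)) (Var 0)) 0) (Less (Var 0) (Var 3))))))"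
  define E :: "nat \<Rightarrow> 'a set" where "E = (\<lambda>_. H)"
  define e :: "nat \<Rightarrow> 'a" where "e = (\<lambda>_. Z)"
  have SE: "set_env M E" using HS by (simp add: set_env_def E_def)
  have sp: "sigma_fm 3 p"
  proof -
    have "delta0 (Conj (Less (Var 2) (Var 1)) (Conj (Mem (mpt (mpt (Var 4) (Var 1)) (Var 0)) 0) (Less (Var 0) (Var 3))))"
      by (intro delta0.intros)
    then have "sigma_fm (Suc 0) (Ex (Ex (Conj (Less (Var 2) (Var 1)) (Conj (Mem (mpt (mpt (Var 4) (Var 1)) (Var 0)) 0) (Less (Var 0) (Var 3))))))"
      by (intro sigma_fm_pi_fm.intros)
    then have "pi_fm (Suc (Suc 0)) (Ex (Ex (Conj (Less (Var 2) (Var 1)) (Conj (Mem (mpt (mpt (Var 4) (Var 1)) (Var 0)) 0) (Less (Var 0) (Var 3))))))"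
      by (rule sigma_fm_pi_fm.intros(5))
    then have "pi_fm (Suc (Suc 0)) p" unfolding p_def by (rule sigma_fm_pi_fm.intros(6))
    then have "sigma_fm (Suc (Suc (Suc 0))) p" by (rule sigma_fm_pi_fm.intros(3))
    then show ?thesis by (simp add: numeral_eq_Suc)
  qed
  have sat_eq: "sat M (case_nat j (case_nat i e)) E p \<longleftrightarrow> inf_many M (\<lambda>z. val_lt M H i z j)" for i j
    unfolding p_def inf_many_def val_lt_def E_def by auto
  from B3 have "\<forall>p e E u. sigma_fm 3 p \<and> set_env M E \<longrightarrow>
        (\<forall>i. lt M i u \<longrightarrow> (\<exists>j. sat M (case_nat j (case_nat i e)) E p))
        \<longrightarrow> (\<exists>v. \<forall>i. lt M i u \<longrightarrow> (\<exists>j. lt M j v \<and> sat M (case_nat j (case_nat i e)) E p))"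
    unfolding BSigma_def .
  from this[THEN spec[of _ p], THEN spec[of _ e], THEN spec[of _ E], THEN spec[of _ u]] sp SE
  have "(\<forall>i. lt M i u \<longrightarrow> (\<exists>j. sat M (case_nat j (case_nat i e)) E p))
        \<longrightarrow> (\<exists>v. \<forall>i. lt M i u \<longrightarrow> (\<exists>j. lt M j v \<and> sat M (case_nat j (case_nat i e)) E p))" by blast
  then obtain v where v: "\<forall>i. lt M i u \<longrightarrow> (\<exists>j. lt M j v \<and> inf_many M (\<lambda>z. val_lt M H i z j))"
    using A unfolding sat_eq by blast
  show "\<exists>Mb. \<forall>x. lt M x u \<longrightarrow> inf_many M (\<lambda>z. val_lt M H x z Mb)"
  proof (intro exI[of _ v] allI impI)
    fix x assume "lt M x u"
    then obtain j where j: "lt M j v" "inf_many M (\<lambda>z. val_lt M H x z j)" using v by blast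
    show "inf_many M (\<lambda>z. val_lt M H x z v)"
      using j unfolding inf_many_def val_lt_def by (meson lt_trans)
  qed
qed

end

theorem mainTheorem7:
  fixes M :: "'a l2model"
  assumes "RCA0 M" and "BSigma 2 M"
  shows "BSigma 3 M \<longleftrightarrow> bounded_inf_principle M"
proof (cases "sets M = {}")
  case True
  have "BSigma 3 M" unfolding BSigma_def set_env_def using True by auto
  moreover have "bounded_inf_principle M" unfolding bounded_inf_principle_def using True by auto
  ultimately show ?thesis by simp
next
  case False
  have R: "rca M" using assms False by (simp add: rca_def)
  show ?thesis
  proof
    assume "BSigma 3 M" then show "bounded_inf_principle M" by (rule rca.forward[OF R])
  next
    assume PR: "bounded_inf_principle M"
    show "BSigma 3 M" unfolding BSigma_def
    proof (intro allI impI)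
      fix p e E u assume A: "sigma_fm 3 p \<and> set_env M E"
        and hyp: "\<forall>i. lt M i u \<longrightarrow> (\<exists>j. sat M (case_nat j (case_nat i e)) E p)"
      obtain k b c \<delta> where d: "delta0 \<delta>" "p = exs k (alls b (exs c \<delta>))" using sigma3_nf A by blast
      have RC: "rctx M E \<delta>" using R A d by (simp add: rctx_def rctx_axioms_def)
      show "\<exists>v. \<forall>i. lt M i u \<longrightarrow> (\<exists>j. lt M j v \<and> sat M (case_nat j (case_nat i e)) E p)"
        using rctx.reverse[OF RC PR, of u e k b c] hyp unfolding d(2) by blast
    qed
  qed
qed


end
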